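(* Let $\bm{f} = (f_1, \ldots, f_p) \subset \mathbb{Z}[x_1, \ldots, x_n]$, $\bm{A} = (a_{i,j}) \in \mathrm{GL}_n(\mathbb{Z})$ and $\bm{u} = (u_1, \ldots, u_p) \in \mathbb{Z}^p$ with $\deg(f_i) \le d$, $\mathrm{ht}(f_i) \le b$ and $\mathrm{ht}(u_i) \le b$ for $1 \le i \le p$, and $\mathrm{ht}(a_{i,j}) \le b$ for $1 \le i,j \le n$. Then there exists a straight-line program $\Gamma$ of length $O\left(p\binom{n+d}{d} + pn\right)$ using integer constants of height in $O(b)$ which evaluates the polynomial system \[ \left(f_1^{\bm A},\dots,f_p^{\bm A},\ [\ell_1 \cdots \ell_p]\,\mathrm{jac}(\bm{f}^{\bm A}, 1),\ u_1\ell_1 + \cdots + u_p\ell_p - 1\right) \] in the variables $x_1,\dots,x_n,\ell_1,\dots,\ell_p$.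
   Context: $f_j^{\bm A}$ denotes the polynomial $f_j(\bm A\bm x)$ where $\bm x=(x_1,\dots,x_n)^T$; $\ell_1,\dots,\ell_p$ are new indeterminates; $\mathrm{jac}(\bm f^{\bm A},1)$ is the $p\times(n-1)$ matrix $(\partial f_j^{\bm A}/\partial x_k)_{1\le j\le p,\,2\le k\le n}$, so $[\ell_1\cdots\ell_p]\,\mathrm{jac}(\bm f^{\bm A},1)$ is a row of $n-1$ polynomials. A straight-line program is a sequence of arithmetic operations ($+,-,\times$) on inputs, constants, and earlier results; its length is the number of operations, and it evaluates a sequence of polynomials if those appear among its computed results. The height of a nonzero integer $a$ is $\log_2|a|$; the height of an integer polynomial is the maximum height of its coefficients. *)

theory Defs
  imports "HOL-Library.Poly_Mapping" "Jordan_Normal_Form.Matrix"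
begin

text \<open>Multivariate integer polynomials: finitely supported maps from monomials
(exponent vectors, variable i is indexed by the natural number i) to coefficients.\<close>
type_synonym mpoly = "(nat \<Rightarrow>\<^sub>0 nat) \<Rightarrow>\<^sub>0 int"

definition mVar :: "nat \<Rightarrow> mpoly" where
  "mVar i = Poly_Mapping.single (Poly_Mapping.single i 1) 1"

definition mConst :: "int \<Rightarrow> mpoly" where
  "mConst c = Poly_Mapping.single 0 c"

definition mon_deg :: "(nat \<Rightarrow>\<^sub>0 nat) \<Rightarrow> nat" where
  "mon_deg m = (\<Sum>i\<in>Poly_Mapping.keys m. Poly_Mapping.lookup m i)"

text \<open>Total degree at most d (the zero polynomial has degree -infinity).\<close>
definition deg_le :: "mpoly \<Rightarrow> nat \<Rightarrow> bool" where
  "deg_le f d \<longleftrightarrow> (\<forall>m\<in>Poly_Mapping.keys f. mon_deg m \<le> d)"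

definition mvars :: "mpoly \<Rightarrow> nat set" where
  "mvars f = (\<Union>m\<in>Poly_Mapping.keys f. Poly_Mapping.keys m)"

text \<open>Height of an integer: log2 |a| (for a = 0 this is 0 by Isabelle's convention log 0 = 0).\<close>
definition ht :: "int \<Rightarrow> real" where
  "ht a = log 2 \<bar>real_of_int a\<bar>"

definition poly_ht_le :: "mpoly \<Rightarrow> real \<Rightarrow> bool" where
  "poly_ht_le f b \<longleftrightarrow> (\<forall>m\<in>Poly_Mapping.keys f. ht (Poly_Mapping.lookup f m) \<le> b)"

definition msubst :: "(nat \<Rightarrow> mpoly) \<Rightarrow> mpoly \<Rightarrow> mpoly" where
  "msubst \<sigma> f = (\<Sum>m\<in>Poly_Mapping.keys f. mConst (Poly_Mapping.lookup f m) * (\<Prod>i\<in>Poly_Mapping.keys m. \<sigma> i ^ Poly_Mapping.lookup m i))"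

text \<open>f^A = f(A x), for an n x n matrix A: x_i is replaced by sum_j a_ij x_j.\<close>
definition mtransform :: "nat \<Rightarrow> int mat \<Rightarrow> mpoly \<Rightarrow> mpoly" where
  "mtransform n A f = msubst (\<lambda>i. \<Sum>j<n. mConst (A $$ (i, j)) * mVar j) f"

definition mpderiv :: "nat \<Rightarrow> mpoly \<Rightarrow> mpoly" where
  "mpderiv k f = (\<Sum>m\<in>Poly_Mapping.keys f.
      Poly_Mapping.single (m - Poly_Mapping.single k 1) (int (Poly_Mapping.lookup m k) * Poly_Mapping.lookup f m))"

text \<open>Straight-line programs. Operands: input variable i, an integer constant,
or the result of an earlier operation (0-indexed).\<close>
datatype operand = Inp nat | Cst int | Res nat
datatype arith_op = OAdd | OSub | OMul
type_synonym instr = "arith_op \<times> operand \<times> operand"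

definition operand_ok :: "nat \<Rightarrow> nat \<Rightarrow> operand \<Rightarrow> bool" where
  "operand_ok ninp k opd \<longleftrightarrow> (case opd of Inp i \<Rightarrow> i < ninp | Cst c \<Rightarrow> True | Res j \<Rightarrow> j < k)"

definition slp_wf :: "nat \<Rightarrow> instr list \<Rightarrow> bool" where
  "slp_wf ninp \<Gamma> \<longleftrightarrow> (\<forall>k<length \<Gamma>. case \<Gamma> ! k of (_, o1, o2) \<Rightarrow>
      operand_ok ninp k o1 \<and> operand_ok ninp k o2)"

fun operand_val :: "mpoly list \<Rightarrow> operand \<Rightarrow> mpoly" where
  "operand_val rs (Inp i) = mVar i"
| "operand_val rs (Cst c) = mConst c"
| "operand_val rs (Res j) = rs ! j"

fun op_apply :: "arith_op \<Rightarrow> mpoly \<Rightarrow> mpoly \<Rightarrow> mpoly" where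
  "op_apply OAdd a b = a + b"
| "op_apply OSub a b = a - b"
| "op_apply OMul a b = a * b"

text \<open>The list of computed results (as polynomials in the inputs, input i being mVar i).\<close>
definition slp_results :: "instr list \<Rightarrow> mpoly list" where
  "slp_results \<Gamma> = foldl (\<lambda>rs (oper, o1, o2).
       rs @ [op_apply oper (operand_val rs o1) (operand_val rs o2)]) [] \<Gamma>"

fun operand_consts :: "operand \<Rightarrow> int set" where
  "operand_consts (Cst c) = {c}"
| "operand_consts _ = {}"

definition slp_consts :: "instr list \<Rightarrow> int set" where
  "slp_consts \<Gamma> = (\<Union>(_, o1, o2)\<in>set \<Gamma>. operand_consts o1 \<union> operand_consts o2)"

text \<open>The target system. Variables x_1..x_n are mVar 0..n-1, l_1..l_p are mVar n..n+p-1.\<close>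
definition target_system :: "nat \<Rightarrow> int mat \<Rightarrow> mpoly list \<Rightarrow> int list \<Rightarrow> mpoly list" where
  "target_system n A f u =
     (let p = length f; fA = map (mtransform n A) f in
      fA
      @ map (\<lambda>k. \<Sum>j<p. mVar (n + j) * mpderiv k (fA ! j)) [1..<n]
      @ [(\<Sum>j<p. mConst (u ! j) * mVar (n + j)) - 1])"

end

theory Submission
  imports Defs
begin

lemma mConst_eq: "mConst c = of_int c"
  by (simp add: mConst_def flip: single_of_int)

lemma ht_0[simp]: "ht 0 = 0" and ht_1[simp]: "ht 1 = 0"
  by (simp_all add: ht_def log_def)

lemma slp_results_snoc:
  "slp_results (\<Gamma> @ [(oper, o1, o2)]) = slp_results \<Gamma> @ [op_apply oper (operand_val (slp_results \<Gamma>) o1) (operand_val (slp_results \<Gamma>) o2)]"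
  by (simp add: slp_results_def)

lemma length_slp_results[simp]: "length (slp_results \<Gamma>) = length \<Gamma>"
proof (induction \<Gamma> rule: rev_induct)
  case Nil then show ?case by (simp add: slp_results_def)
next
  case (snoc x xs) then show ?case
    by (cases x) (simp add: slp_results_snoc)
qed

lemma slp_consts_snoc:
  "slp_consts (\<Gamma> @ [(oper, o1, o2)]) = slp_consts \<Gamma> \<union> operand_consts o1 \<union> operand_consts o2"
  by (auto simp add: slp_consts_def)

lemma slp_wf_snoc:
  "slp_wf N \<Gamma> \<Longrightarrow> operand_ok N (length \<Gamma>) o1 \<Longrightarrow> operand_ok N (length \<Gamma>) o2 \<Longrightarrow>
   slp_wf N (\<Gamma> @ [(oper, o1, o2)])"
  unfolding slp_wf_def
  by (auto simp: nth_append less_Suc_eq)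

definition good :: "nat \<Rightarrow> real \<Rightarrow> instr list \<Rightarrow> bool" where
  "good N B \<Gamma> \<longleftrightarrow> slp_wf N \<Gamma> \<and> (\<forall>c\<in>slp_consts \<Gamma>. ht c \<le> B)"

definition av :: "instr list \<Rightarrow> mpoly set" where
  "av \<Gamma> = set (slp_results \<Gamma>)"

definition opnd :: "nat \<Rightarrow> real \<Rightarrow> instr list \<Rightarrow> mpoly \<Rightarrow> bool" where
  "opnd N B \<Gamma> g \<longleftrightarrow> g \<in> av \<Gamma> \<or> (\<exists>i<N. g = mVar i) \<or> (\<exists>c. ht c \<le> B \<and> g = of_int c)"

definition ext :: "nat \<Rightarrow> real \<Rightarrow> instr list \<Rightarrow> instr list \<Rightarrow> nat \<Rightarrow> bool" where
  "ext N B \<Gamma> \<Gamma>' k \<longleftrightarrow> good N B \<Gamma>' \<and> av \<Gamma> \<subseteq> av \<Gamma>' \<and> length \<Gamma>' \<le> length \<Gamma> + k"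

lemma good_Nil: "good N B []"
  by (simp add: good_def slp_wf_def slp_consts_def)

lemma opnd_mono: "opnd N B \<Gamma> g \<Longrightarrow> av \<Gamma> \<subseteq> av \<Gamma>' \<Longrightarrow> opnd N B \<Gamma>' g"
  unfolding opnd_def by blast

lemma opnd_av: "g \<in> av \<Gamma> \<Longrightarrow> opnd N B \<Gamma> g"
  unfolding opnd_def by blast

lemma opnd_var: "i < N \<Longrightarrow> opnd N B \<Gamma> (mVar i)"
  unfolding opnd_def by blast

lemma opnd_const: "ht c \<le> B \<Longrightarrow> opnd N B \<Gamma> (of_int c)"
  unfolding opnd_def by blast

lemma opnd_0: "0 \<le> B \<Longrightarrow> opnd N B \<Gamma> 0"
  using opnd_const[of 0 B N \<Gamma>] by simp

lemma opnd_1: "0 \<le> B \<Longrightarrow> opnd N B \<Gamma> 1"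
  using opnd_const[of 1 B N \<Gamma>] by simp

lemma ext_refl: "good N B \<Gamma> \<Longrightarrow> ext N B \<Gamma> \<Gamma> 0"
  by (simp add: ext_def)

lemma ext_trans: "ext N B \<Gamma>1 \<Gamma>2 k1 \<Longrightarrow> ext N B \<Gamma>2 \<Gamma>3 k2 \<Longrightarrow> ext N B \<Gamma>1 \<Gamma>3 (k1 + k2)"
  by (auto simp: ext_def)

lemma ext_mono: "ext N B \<Gamma>1 \<Gamma>2 k1 \<Longrightarrow> k1 \<le> k2 \<Longrightarrow> ext N B \<Gamma>1 \<Gamma>2 k2"
  by (auto simp: ext_def)

lemma ext_good: "ext N B \<Gamma>1 \<Gamma>2 k \<Longrightarrow> good N B \<Gamma>2"
  by (auto simp: ext_def)

lemma ext_opnd: "ext N B \<Gamma>1 \<Gamma>2 k \<Longrightarrow> opnd N B \<Gamma>1 g \<Longrightarrow> opnd N B \<Gamma>2 g"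
  by (auto simp: ext_def intro: opnd_mono)

lemma ext_av: "ext N B \<Gamma>1 \<Gamma>2 k \<Longrightarrow> g \<in> av \<Gamma>1 \<Longrightarrow> g \<in> av \<Gamma>2"
  by (auto simp: ext_def)

lemma opnd_operand:
  assumes "opnd N B \<Gamma> g"
  shows "\<exists>opd. operand_ok N (length \<Gamma>) opd \<and> operand_val (slp_results \<Gamma>) opd = g
              \<and> (\<forall>c\<in>operand_consts opd. ht c \<le> B)"
proof -
  consider "g \<in> av \<Gamma>" | "\<exists>i<N. g = mVar i" | "\<exists>c. ht c \<le> B \<and> g = of_int c"
    using assms unfolding opnd_def by blast
  then show ?thesis
  proof cases
    case 1
    then obtain j where "j < length \<Gamma>" "slp_results \<Gamma> ! j = g"
      unfolding av_def by (metis in_set_conv_nth length_slp_results)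
    then show ?thesis by (intro exI[of _ "Res j"]) (simp add: operand_ok_def)
  next
    case 2
    then obtain i where "i < N" "g = mVar i" by blast
    then show ?thesis by (intro exI[of _ "Inp i"]) (simp add: operand_ok_def)
  next
    case 3
    then obtain c where "ht c \<le> B" "g = of_int c" by blast
    then show ?thesis by (intro exI[of _ "Cst c"]) (simp add: operand_ok_def mConst_eq)
  qed
qed

lemma emit:
  assumes "good N B \<Gamma>" "opnd N B \<Gamma> a" "opnd N B \<Gamma> b"
  shows "\<exists>\<Gamma>'. ext N B \<Gamma> \<Gamma>' 1 \<and> op_apply oper a b \<in> av \<Gamma>'"
proof -
  obtain o1 where o1: "operand_ok N (length \<Gamma>) o1" "operand_val (slp_results \<Gamma>) o1 = a"
    "\<forall>c\<in>operand_consts o1. ht c \<le> B" using opnd_operand[OF assms(2)] by blast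
  obtain o2 where o2: "operand_ok N (length \<Gamma>) o2" "operand_val (slp_results \<Gamma>) o2 = b"
    "\<forall>c\<in>operand_consts o2. ht c \<le> B" using opnd_operand[OF assms(3)] by blast
  let ?G = "\<Gamma> @ [(oper, o1, o2)]"
  have "good N B ?G" using assms(1) o1 o2
    by (auto simp: good_def slp_consts_snoc intro: slp_wf_snoc)
  moreover have "av \<Gamma> \<subseteq> av ?G" "op_apply oper a b \<in> av ?G"
    by (auto simp: av_def slp_results_snoc o1 o2)
  ultimately show ?thesis by (intro exI[of _ ?G]) (auto simp: ext_def)
qed

lemma emit_ext:
  assumes "ext N B \<Gamma>0 \<Gamma> k" "opnd N B \<Gamma> a" "opnd N B \<Gamma> b"
  shows "\<exists>\<Gamma>'. ext N B \<Gamma>0 \<Gamma>' (k + 1) \<and> op_apply oper a b \<in> av \<Gamma>'"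
  using emit[OF ext_good[OF assms(1)] assms(2,3), of oper] ext_trans[OF assms(1)] by blast

lemma batch:
  assumes fin: "finite I" and g: "good N B \<Gamma>"
    and each: "\<And>i \<Gamma>1. i \<in> I \<Longrightarrow> good N B \<Gamma>1 \<Longrightarrow> av \<Gamma> \<subseteq> av \<Gamma>1 \<Longrightarrow>
        \<exists>\<Gamma>2. ext N B \<Gamma>1 \<Gamma>2 (c i) \<and> P i (av \<Gamma>2)"
    and mono: "\<And>i S S'. P i S \<Longrightarrow> S \<subseteq> S' \<Longrightarrow> P i S'"
  shows "\<exists>\<Gamma>'. ext N B \<Gamma> \<Gamma>' (\<Sum>i\<in>I. c i) \<and> (\<forall>i\<in>I. P i (av \<Gamma>'))"
  using fin each
proof (induction I rule: finite_induct)
  case empty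
  then show ?case using ext_refl[OF g] by auto
next
  case (insert x F)
  then obtain \<Gamma>1 where G1: "ext N B \<Gamma> \<Gamma>1 (\<Sum>i\<in>F. c i)" "\<forall>i\<in>F. P i (av \<Gamma>1)" by blast
  then obtain \<Gamma>2 where G2: "ext N B \<Gamma>1 \<Gamma>2 (c x)" "P x (av \<Gamma>2)"
    using insert.prems[of x \<Gamma>1] by (auto simp: ext_def)
  have "ext N B \<Gamma> \<Gamma>2 (c x + (\<Sum>i\<in>F. c i))"
    using ext_trans[OF G1(1) G2(1)] by (simp add: add.commute)
  moreover have "\<forall>i\<in>insert x F. P i (av \<Gamma>2)"
    using G1(2) G2 mono by (auto simp: ext_def)
  ultimately show ?case using insert.hyps by auto
qed

lemma sum_lemma:
  assumes fin: "finite I" and g: "good N B \<Gamma>" and B: "0 \<le> B"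
    and ops: "\<And>i. i \<in> I \<Longrightarrow> opnd N B \<Gamma> (h i)"
  shows "\<exists>\<Gamma>'. ext N B \<Gamma> \<Gamma>' (card I + 1) \<and> (\<Sum>i\<in>I. h i) \<in> av \<Gamma>'"
  using fin ops
proof (induction I rule: finite_induct)
  case empty
  have "\<exists>\<Gamma>'. ext N B \<Gamma> \<Gamma>' 1 \<and> op_apply OAdd 0 0 \<in> av \<Gamma>'"
    by (rule emit[OF g opnd_0[OF B] opnd_0[OF B]])
  then show ?case by simp
next
  case (insert x F)
  then obtain \<Gamma>1 where G1: "ext N B \<Gamma> \<Gamma>1 (card F + 1)" "(\<Sum>i\<in>F. h i) \<in> av \<Gamma>1" by blast
  have "\<exists>\<Gamma>'. ext N B \<Gamma> \<Gamma>' (card F + 1 + 1) \<and> op_apply OAdd (h x) (\<Sum>i\<in>F. h i) \<in> av \<Gamma>'"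
    using insert.prems G1 by (intro emit_ext) (auto intro: ext_opnd opnd_av)
  then show ?case using insert.hyps by simp
qed

lemma sumprod_lemma:
  assumes fin: "finite I" and g: "good N B \<Gamma>" and B: "0 \<le> B"
    and ops: "\<And>i. i \<in> I \<Longrightarrow> opnd N B \<Gamma> (h i)" "\<And>i. i \<in> I \<Longrightarrow> opnd N B \<Gamma> (k i)"
  shows "\<exists>\<Gamma>'. ext N B \<Gamma> \<Gamma>' (2 * card I + 1) \<and> (\<Sum>i\<in>I. h i * k i) \<in> av \<Gamma>'"
proof -
  obtain \<Gamma>1 where G1: "ext N B \<Gamma> \<Gamma>1 (\<Sum>i\<in>I. 1)" "\<forall>i\<in>I. h i * k i \<in> av \<Gamma>1"
    using batch[OF fin g, of "\<lambda>_. 1" "\<lambda>i S. h i * k i \<in> S"]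
  proof -
    have "\<And>i \<Gamma>1. i \<in> I \<Longrightarrow> good N B \<Gamma>1 \<Longrightarrow> av \<Gamma> \<subseteq> av \<Gamma>1 \<Longrightarrow>
        \<exists>\<Gamma>2. ext N B \<Gamma>1 \<Gamma>2 1 \<and> h i * k i \<in> av \<Gamma>2"
      using emit[where oper=OMul] ops opnd_mono by (metis op_apply.simps(3))
    then show ?thesis
      using batch[OF fin g, of "\<lambda>_. 1" "\<lambda>i S. h i * k i \<in> S"] that by blast
  qed
  obtain \<Gamma>2 where G2: "ext N B \<Gamma>1 \<Gamma>2 (card I + 1)" "(\<Sum>i\<in>I. h i * k i) \<in> av \<Gamma>2"
    using sum_lemma[OF fin ext_good[OF G1(1)] B, of "\<lambda>i. h i * k i"] G1(2) opnd_av by blast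
  show ?thesis using ext_trans[OF G1(1) G2(1)] G2(2) by (intro exI[of _ \<Gamma>2]) (auto elim: ext_mono)
qed

declare One_nat_def[simp del]

abbreviation lookup :: "('a \<Rightarrow>\<^sub>0 'b::zero) \<Rightarrow> 'a \<Rightarrow> 'b" where "lookup \<equiv> Poly_Mapping.lookup"
abbreviation keys :: "('a \<Rightarrow>\<^sub>0 'b::zero) \<Rightarrow> 'a set" where "keys \<equiv> Poly_Mapping.keys"

abbreviation ee :: "nat \<Rightarrow> nat \<Rightarrow>\<^sub>0 nat" where "ee i \<equiv> Poly_Mapping.single i 1"

lemma lookup_ee: "lookup (ee i) j = (if i = j then 1 else 0)"
  by (simp add: lookup_single)

lemma ee_cancel: "lookup a k \<noteq> 0 \<Longrightarrow> a - ee k + ee k = a"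
  by (rule poly_mapping_eqI) (auto simp add: lookup_add lookup_minus lookup_single when_def)

lemma ee_cancel2: "lookup a k \<noteq> 0 \<Longrightarrow> a - ee k = m \<Longrightarrow> a = m + ee k"
  using ee_cancel by metis

lemma lookup_deriv:
  "lookup (mpderiv k f) m = of_nat (lookup m k + 1) * lookup f (m + ee k)"
proof -
  have key: "(of_nat (lookup m' k) * lookup f m' when m' - ee k = m) =
        (if m' = m + ee k then of_nat (lookup m k + 1) * lookup f m' else 0)" for m'
  proof (cases "lookup m' k = 0")
    case True
    then have "m' \<noteq> m + ee k"
      by (metis add_is_0 lookup_add lookup_single_eq one_neq_zero)
    then show ?thesis using True by simp
  next
    case False
    have "m' - ee k = m \<longleftrightarrow> m' = m + ee k"
    proof
      assume "m' - ee k = m"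
      then show "m' = m + ee k"
        using False by (rule ee_cancel2[rotated])
    next
      assume "m' = m + ee k"
      then show "m' - ee k = m"
        by (auto intro!: poly_mapping_eqI simp: lookup_add lookup_minus lookup_ee)
    qed
    moreover have "m' = m + ee k \<Longrightarrow> lookup m' k = lookup m k + 1"
      by (simp add: lookup_add)
    ultimately show ?thesis by auto
  qed
  have "lookup (mpderiv k f) m = (\<Sum>m'\<in>keys f. of_nat (lookup m' k) * lookup f m' when m' - ee k = m)"
    by (simp add: mpderiv_def lookup_sum lookup_single)
  also have "\<dots> = (\<Sum>m'\<in>keys f. if m' = m + ee k then of_nat (lookup m k + 1) * lookup f m' else 0)"
    by (intro sum.cong refl key)
  also have "\<dots> = of_nat (lookup m k + 1) * lookup f (m + ee k)"
    by (simp add: sum.delta in_keys_iff)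
  finally show ?thesis .
qed

lemma deriv_add: "mpderiv k (f + g) = mpderiv k f + mpderiv k g"
  by (rule poly_mapping_eqI) (simp add: lookup_deriv lookup_add algebra_simps)

lemma deriv_diff: "mpderiv k (f - g) = mpderiv k f - mpderiv k g"
  by (rule poly_mapping_eqI) (simp add: lookup_deriv lookup_minus algebra_simps)

lemma deriv_0[simp]: "mpderiv k 0 = 0"
  by (rule poly_mapping_eqI) (simp add: lookup_deriv)

lemma deriv_sum: "mpderiv k (\<Sum>i\<in>I. g i) = (\<Sum>i\<in>I. mpderiv k (g i))"
  by (induction I rule: infinite_finite_induct) (auto simp: deriv_add)

lemma deriv_single:
  "mpderiv k (Poly_Mapping.single a c) = Poly_Mapping.single (a - ee k) (of_nat (lookup a k) * c)"
proof (rule poly_mapping_eqI)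
  fix m
  show "lookup (mpderiv k (Poly_Mapping.single a c)) m =
        lookup (Poly_Mapping.single (a - ee k) (of_nat (lookup a k) * c)) m"
  proof (cases "a = m + ee k")
    case True
    then have "a - ee k = m" "lookup a k = lookup m k + 1"
      by (auto intro!: poly_mapping_eqI simp: lookup_add lookup_minus lookup_ee)
    then show ?thesis using True by (simp add: lookup_deriv)
  next
    case False
    have "\<not> (a - ee k = m \<and> lookup a k \<noteq> 0)"
    proof
      assume "a - ee k = m \<and> lookup a k \<noteq> 0"
      then have "a = m + ee k"
        using ee_cancel2 by blast
      then show False using False by simp
    qed
    then show ?thesis using False
      by (auto simp: lookup_deriv lookup_single when_def)
  qed
qed

lemma deriv_of_int[simp]: "mpderiv k (of_int c) = 0"
  by (simp add: deriv_single flip: single_of_int)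

lemma deriv_1[simp]: "mpderiv k 1 = 0"
  using deriv_of_int[of k 1] by simp

lemma deriv_mVar: "mpderiv k (mVar j) = (if j = k then 1 else 0)"
  by (simp add: mVar_def deriv_single lookup_single when_def)

lemma deriv_mult_single:
  "mpderiv k (Poly_Mapping.single a 1 * Poly_Mapping.single b 1) =
   mpderiv k (Poly_Mapping.single a 1) * Poly_Mapping.single b 1 +
   Poly_Mapping.single a 1 * mpderiv k (Poly_Mapping.single b (1::int))"
proof -
  have e1: "Poly_Mapping.single (a - ee k + b) (int (lookup a k)) =
            Poly_Mapping.single (a + b - ee k) (int (lookup a k))"
  proof (cases "lookup a k = 0")
    case False
    then have "a - ee k + b = a + b - ee k"
      by (intro poly_mapping_eqI) (auto simp add: lookup_add lookup_minus lookup_single when_def)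
    then show ?thesis by simp
  qed simp
  have e2: "Poly_Mapping.single (a + (b - ee k)) (int (lookup b k)) =
            Poly_Mapping.single (a + b - ee k) (int (lookup b k))"
  proof (cases "lookup b k = 0")
    case False
    then have "a + (b - ee k) = a + b - ee k"
      by (intro poly_mapping_eqI) (auto simp add: lookup_add lookup_minus lookup_single when_def)
    then show ?thesis by simp
  qed simp
  have "mpderiv k (Poly_Mapping.single a 1 * Poly_Mapping.single b 1) =
        Poly_Mapping.single (a + b - ee k) (int (lookup a k) + int (lookup b k))"
    by (simp only: mult_single deriv_single lookup_add mult_1 of_nat_add mult_1_right)
  also have "\<dots> = Poly_Mapping.single (a + b - ee k) (int (lookup a k)) + Poly_Mapping.single (a + b - ee k) (int (lookup b k))"
    by (rule single_add)
  also have "\<dots> = mpderiv k (Poly_Mapping.single a 1) * Poly_Mapping.single b 1 +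
   Poly_Mapping.single a 1 * mpderiv k (Poly_Mapping.single b (1::int))"
    by (simp only: deriv_single mult_single e1 e2 mult_1_right mult_1)
  finally show ?thesis .
qed

lemma deriv_mult: "mpderiv k (f * g) = mpderiv k f * g + f * mpderiv k g"
proof -
  have "\<forall>g. mpderiv k (f * g) = mpderiv k f * g + f * mpderiv k g"
    using subset_UNIV
  proof (induction f rule: frag_induction)
    case zero then show ?case by simp
  next
    case (one x)
    show ?case
    proof
      fix g :: mpoly
      show "mpderiv k (frag_of x * g) = mpderiv k (frag_of x) * g + frag_of x * mpderiv k g"
        using subset_UNIV
      proof (induction g rule: frag_induction)
        case zero then show ?case by simp
      next
        case (one y) show ?case by (rule deriv_mult_single)
      next
        case (diff a b) then show ?case by (simp add: deriv_diff algebra_simps)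
      qed
    qed
  next
    case (diff a b) then show ?case by (simp add: deriv_diff algebra_simps)
  qed
  then show ?thesis by blast
qed

lemma deriv_cmul: "mpderiv k (of_int c * f) = of_int c * mpderiv k f"
  by (simp add: deriv_mult)

lemma deriv_prod:
  "finite I \<Longrightarrow> mpderiv k (\<Prod>i\<in>I. g i) = (\<Sum>i\<in>I. mpderiv k (g i) * (\<Prod>j\<in>I-{i}. g j))"
proof (induction I rule: finite_induct)
  case empty then show ?case by simp
next
  case (insert x F)
  have "mpderiv k (\<Prod>i\<in>insert x F. g i) = mpderiv k (g x) * (\<Prod>i\<in>F. g i) + g x * mpderiv k (\<Prod>i\<in>F. g i)"
    using insert by (simp add: deriv_mult)
  also have "g x * mpderiv k (\<Prod>i\<in>F. g i) = (\<Sum>i\<in>F. mpderiv k (g i) * (\<Prod>j\<in>insert x F-{i}. g j))"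
  proof -
    have *: "(\<Prod>j\<in>insert x F-{i}. g j) = g x * (\<Prod>j\<in>F-{i}. g j)" if i: "i \<in> F" for i
    proof -
      have "insert x F - {i} = insert x (F - {i})" using i insert.hyps(2) by auto
      moreover have "x \<notin> F - {i}" using insert.hyps(2) by auto
      then have "prod g (insert x (F - {i})) = g x * prod g (F - {i})"
        using insert.hyps(1) by (intro prod.insert) auto
      ultimately show ?thesis by simp
    qed
    show ?thesis
      by (simp only: insert.IH sum_distrib_left) (rule sum.cong[OF refl], simp only: * mult_ac)
  qed
  also have "mpderiv k (g x) * (\<Prod>i\<in>F. g i) = mpderiv k (g x) * (\<Prod>j\<in>insert x F-{x}. g j)"
    using insert.hyps(2) by (simp add: Diff_insert_absorb)
  finally show ?case by (simp only: sum.insert[OF insert.hyps])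
qed

lemma deriv_pow: "mpderiv k (g ^ e) = of_nat e * g ^ (e - 1) * mpderiv k g"
proof (induction e)
  case 0 then show ?case by simp
next
  case (Suc e)
  then show ?case
    by (cases e) (simp_all add: deriv_mult algebra_simps)
qed

definition Ymon :: "(nat \<Rightarrow> 'a::comm_ring_1) \<Rightarrow> nat \<Rightarrow> (nat \<Rightarrow>\<^sub>0 nat) \<Rightarrow> 'a" where
  "Ymon y n m = (\<Prod>i<n. y i ^ lookup m i)"

lemma Ymon_0[simp]: "Ymon y n 0 = 1"
  by (simp add: Ymon_def)

lemma Ymon_add: "Ymon y n (a + b) = Ymon y n a * Ymon y n b"
  by (simp add: Ymon_def lookup_add power_add prod.distrib)

lemma Ymon_ee: "i < n \<Longrightarrow> Ymon y n (ee i) = y i"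
proof -
  assume i: "i < n"
  have "(\<Prod>j<n. y j ^ lookup (ee i) j) = (\<Prod>j<n. if j = i then y i else 1)"
    by (rule prod.cong) (auto simp: lookup_ee)
  then show ?thesis using i by (simp add: Ymon_def prod.delta)
qed

lemma Ymon_minus_ee:
  assumes "i < n"
  shows "Ymon y n (m - ee i) = y i ^ (lookup m i - 1) * (\<Prod>j\<in>{..<n}-{i}. y j ^ lookup m j)"
proof -
  have "Ymon y n (m - ee i) = y i ^ lookup (m - ee i) i * (\<Prod>j\<in>{..<n}-{i}. y j ^ lookup (m - ee i) j)"
    unfolding Ymon_def using assms by (simp add: prod.remove)
  also have "(\<Prod>j\<in>{..<n}-{i}. y j ^ lookup (m - ee i) j) = (\<Prod>j\<in>{..<n}-{i}. y j ^ lookup m j)"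
    by (rule prod.cong) (auto simp: lookup_minus lookup_ee)
  finally show ?thesis by (simp add: lookup_minus)
qed

lemma deriv_Ymon:
  "mpderiv k (Ymon y n m) = (\<Sum>i<n. of_nat (lookup m i) * Ymon y n (m - ee i) * mpderiv k (y i))"
proof -
  have "mpderiv k (Ymon y n m) = (\<Sum>i<n. mpderiv k (y i ^ lookup m i) * (\<Prod>j\<in>{..<n}-{i}. y j ^ lookup m j))"
    unfolding Ymon_def by (simp add: deriv_prod)
  also have "\<dots> = (\<Sum>i<n. of_nat (lookup m i) * Ymon y n (m - ee i) * mpderiv k (y i))"
  proof (rule sum.cong[OF refl])
    fix i assume "i \<in> {..<n}"
    then have i: "i < n" by simp
    show "mpderiv k (y i ^ lookup m i) * (\<Prod>j\<in>{..<n}-{i}. y j ^ lookup m j) =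
          of_nat (lookup m i) * Ymon y n (m - ee i) * mpderiv k (y i)"
      unfolding deriv_pow Ymon_minus_ee[OF i] by (simp only: mult_ac)
  qed
  finally show ?thesis .
qed

definition mdeg :: "nat \<Rightarrow> (nat \<Rightarrow>\<^sub>0 nat) \<Rightarrow> nat" where
  "mdeg n m = (\<Sum>i<n. lookup m i)"

definition Mset :: "nat \<Rightarrow> nat \<Rightarrow> (nat \<Rightarrow>\<^sub>0 nat) set" where
  "Mset n d = {m. keys m \<subseteq> {..<n} \<and> mdeg n m \<le> d}"

lemma mon_deg_eq: "keys m \<subseteq> {..<n} \<Longrightarrow> mon_deg m = mdeg n m"
  unfolding mon_deg_def mdeg_def
  by (rule sum.mono_neutral_left) (auto simp: in_keys_iff)

lemma mdeg_add: "mdeg n (a + b) = mdeg n a + mdeg n b"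
  by (simp add: mdeg_def lookup_add sum.distrib)

lemma mdeg_ee: "i < n \<Longrightarrow> mdeg n (ee i) = 1"
  by (simp add: mdeg_def lookup_ee)

lemma mdeg_Suc: "keys m \<subseteq> {..<n} \<Longrightarrow> mdeg (Suc n) m = mdeg n m"
  by (auto simp: mdeg_def in_keys_iff)

lemma Mset_Suc:
  "Mset (Suc n) d = (\<lambda>(e, m). m + Poly_Mapping.single n e) ` (SIGMA e:{..d}. Mset n (d - e))"
proof (rule Set.set_eqI, rule iffI)
  fix m assume m: "m \<in> Mset (Suc n) d"
  define e where "e = lookup m n"
  define m' where "m' = m - Poly_Mapping.single n e"
  have eq: "m = m' + Poly_Mapping.single n e"
    by (rule poly_mapping_eqI) (auto simp: m'_def e_def lookup_add lookup_minus lookup_single when_def)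
  have k: "keys m' \<subseteq> {..<n}"
  proof
    fix x assume "x \<in> keys m'"
    then have "lookup m x \<noteq> 0" "x \<noteq> n"
      by (auto simp: m'_def e_def in_keys_iff lookup_minus lookup_single when_def split: if_splits)
    then have "x \<in> keys m" by (simp add: in_keys_iff)
    then show "x \<in> {..<n}" using m \<open>x \<noteq> n\<close> by (auto simp: Mset_def less_Suc_eq)
  qed
  have "keys (Poly_Mapping.single n e) \<subseteq> {..<Suc n}" by auto
  have "mdeg (Suc n) m = mdeg n m' + e"
    using k by (simp add: eq mdeg_add mdeg_Suc) (simp add: mdeg_def lookup_single)
  then have "e \<le> d" "mdeg n m' \<le> d - e" using m by (auto simp: Mset_def)
  then show "m \<in> (\<lambda>(e, m). m + Poly_Mapping.single n e) ` (SIGMA e:{..d}. Mset n (d - e))"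
    using k eq by (auto simp: Mset_def intro!: image_eqI[of _ _ "(e, m')"])
next
  fix m assume "m \<in> (\<lambda>(e, m). m + Poly_Mapping.single n e) ` (SIGMA e:{..d}. Mset n (d - e))"
  then obtain e m' where m: "m = m' + Poly_Mapping.single n e" "e \<le> d" "keys m' \<subseteq> {..<n}" "mdeg n m' \<le> d - e"
    by (auto simp: Mset_def)
  have "keys m \<subseteq> {..<Suc n}"
    using m(1,3) keys_add[of m' "Poly_Mapping.single n e"] by (auto split: if_splits)
  moreover have "mdeg (Suc n) m = mdeg n m' + e"
    using m by (simp add: mdeg_add mdeg_Suc) (simp add: mdeg_def lookup_single)
  ultimately show "m \<in> Mset (Suc n) d" using m by (auto simp: Mset_def)
qed

lemma Mset_inj:
  "inj_on (\<lambda>(e, m). m + Poly_Mapping.single n e) (SIGMA e:{..d}. Mset n (d - e))"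
proof (rule inj_onI)
  fix x y assume x: "x \<in> (SIGMA e:{..d}. Mset n (d - e))" and y: "y \<in> (SIGMA e:{..d}. Mset n (d - e))"
    and eq: "(\<lambda>(e, m). m + Poly_Mapping.single n e) x = (\<lambda>(e, m). m + Poly_Mapping.single n e) y"
  obtain e m where xe: "x = (e, m)" by (cases x)
  obtain e' m' where ye: "y = (e', m')" by (cases y)
  from x y have a: "keys m \<subseteq> {..<n}" "keys m' \<subseteq> {..<n}" by (auto simp: Mset_def xe ye)
  from eq have a3: "m + Poly_Mapping.single n e = m' + Poly_Mapping.single n e'" by (simp add: xe ye)
  have "n \<notin> keys m" "n \<notin> keys m'" using a by auto
  then have l: "lookup m n = 0" "lookup m' n = 0" by (auto simp: in_keys_iff)
  from arg_cong[OF a3, of "\<lambda>q. lookup q n"] l have "e = e'" by (simp add: lookup_add)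
  with a3 have "m = m'" by simp
  then show "x = y" using \<open>e = e'\<close> by (simp add: xe ye)
qed

lemma Mset_0: "Mset 0 d = {0}"
  by (auto simp: Mset_def mdeg_def)

lemma Mset_card: "finite (Mset n d) \<and> card (Mset n d) = (n + d) choose d"
proof (induction n arbitrary: d)
  case 0 then show ?case by (simp add: Mset_0)
next
  case (Suc n)
  have inj: "inj_on (\<lambda>(e, m). m + Poly_Mapping.single n e) (SIGMA e:{..d}. Mset n (d - e))"
    by (rule Mset_inj)
  have fin: "finite (SIGMA e:{..d}. Mset n (d - e))" using Suc by auto
  have "card (Mset (Suc n) d) = card (SIGMA e:{..d}. Mset n (d - e))"
    unfolding Mset_Suc by (rule card_image[OF inj])
  also have "\<dots> = (\<Sum>e\<le>d. (n + (d - e)) choose (d - e))"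
    using Suc by (simp add: card_SigmaI)
  also have "\<dots> = (\<Sum>k\<le>d. (n + k) choose k)"
    by (rule sum.reindex_bij_witness[where i="\<lambda>k. d - k" and j="\<lambda>k. d - k"]) auto
  also have "\<dots> = (Suc n + d) choose d"
    by (simp add: sum_choose_lower)
  finally show ?case using fin by (simp add: Mset_Suc)
qed

lemma finite_Mset[simp]: "finite (Mset n d)"
  using Mset_card by blast

lemma card_Mset: "card (Mset n d) = (n + d) choose d"
  using Mset_card by blast

lemma keys_add_nat: "keys (a + b) = keys a \<union> keys (b :: nat \<Rightarrow>\<^sub>0 nat)"
  by (auto simp: in_keys_iff lookup_add)

lemma keys_ee[simp]: "keys (ee i) = {i}"
  by simp

definition vv :: "(nat \<Rightarrow>\<^sub>0 nat) \<Rightarrow> nat" where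
  "vv m = (if m = 0 then 0 else Max (keys m))"

lemma vv_in_keys: "m \<noteq> 0 \<Longrightarrow> vv m \<in> keys m"
  by (simp add: vv_def)

lemma le_vv: "j \<in> keys m \<Longrightarrow> j \<le> vv m"
  by (auto simp: vv_def)

lemma add_ee_nz: "m + ee i \<noteq> 0"
proof
  assume "m + ee i = 0"
  then have "lookup (m + ee i) i = 0" by simp
  then show False by (simp add: lookup_add)
qed

lemma vv_add_ee: "vv m \<le> i \<Longrightarrow> vv (m + ee i) = i"
proof -
  assume a: "vv m \<le> i"
  have k: "keys (m + ee i) = insert i (keys m)" by (simp add: keys_add_nat)
  have "Max (insert i (keys m)) = i"
  proof (rule Max_eqI)
    show "finite (insert i (keys m))" by simp
    fix z assume "z \<in> insert i (keys m)"
    then show "z \<le> i" using le_vv[of z m] a by auto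
  next
    show "i \<in> insert i (keys m)" by simp
  qed
  then show ?thesis using add_ee_nz[of m i] k by (simp add: vv_def)
qed

lemma mdeg_mono: "(\<And>j. lookup a j \<le> lookup b j) \<Longrightarrow> mdeg n a \<le> mdeg n b"
  unfolding mdeg_def by (simp add: sum_mono)

lemma Mset_add_ee: "m \<in> Mset n d \<Longrightarrow> i < n \<Longrightarrow> mdeg n m < d \<Longrightarrow> m + ee i \<in> Mset n d"
  by (simp add: Mset_def keys_add_nat mdeg_add mdeg_ee)

definition Rset :: "nat \<Rightarrow> nat \<Rightarrow> (nat \<Rightarrow>\<^sub>0 nat) \<Rightarrow> (nat \<Rightarrow>\<^sub>0 nat) set" where
  "Rset n d m = {r. keys r \<subseteq> {vv m..<n} \<and> mdeg n (m + r) \<le> d}"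

lemma Rset_sub: "Rset n d m \<subseteq> Mset n d"
proof
  fix r assume "r \<in> Rset n d m"
  then have "keys r \<subseteq> {vv m..<n}" "mdeg n m + mdeg n r \<le> d" by (simp_all add: Rset_def mdeg_add)
  then show "r \<in> Mset n d" unfolding Mset_def by auto
qed

lemma finite_Rset[simp]: "finite (Rset n d m)"
  by (rule finite_subset[OF Rset_sub finite_Mset])

definition Hf :: "nat \<Rightarrow> nat \<Rightarrow> ((nat \<Rightarrow>\<^sub>0 nat) \<Rightarrow> 'a) \<Rightarrow> (nat \<Rightarrow> 'a::comm_ring_1) \<Rightarrow> (nat \<Rightarrow>\<^sub>0 nat) \<Rightarrow> 'a" where
  "Hf n d \<gamma> y m = (\<Sum>r\<in>Rset n d m. \<gamma> (m + r) * Ymon y n r)"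

definition chi :: "nat \<Rightarrow> nat \<Rightarrow> (nat \<Rightarrow>\<^sub>0 nat) \<Rightarrow> nat set" where
  "chi n d m = (if mdeg n m < d then {vv m..<n} else {})"

lemma finite_chi[simp]: "finite (chi n d m)"
  by (simp add: chi_def)

lemma Rset_decomp:
  assumes m: "m \<in> Mset n d"
  shows "Rset n d m = insert 0 (\<Union>i\<in>chi n d m. (\<lambda>r. ee i + r) ` Rset n d (m + ee i))"
proof (rule Set.set_eqI, rule iffI)
  fix r assume r: "r \<in> Rset n d m"
  show "r \<in> insert 0 (\<Union>i\<in>chi n d m. (\<lambda>r. ee i + r) ` Rset n d (m + ee i))"
  proof (cases "r = 0")
    case False
    define i where "i = Min (keys r)"
    have ne: "keys r \<noteq> {}" using False by simp
    have iK: "i \<in> keys r" using ne by (simp add: i_def)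
    have iMin: "\<And>j. j \<in> keys r \<Longrightarrow> i \<le> j" by (simp add: i_def)
    have rk: "keys r \<subseteq> {vv m..<n}" "mdeg n (m + r) \<le> d" using r by (auto simp: Rset_def)
    have "lookup r i \<noteq> 0" using iK by (simp add: in_keys_iff)
    then have "1 \<le> lookup r i" by simp
    also have "lookup r i \<le> mdeg n r" unfolding mdeg_def using iK rk(1)
      by (intro member_le_sum) auto
    finally have "mdeg n m < d" using rk(2) by (simp add: mdeg_add)
    then have ichi: "i \<in> chi n d m" using iK rk(1) by (auto simp: chi_def)
    have vvi: "vv (m + ee i) = i" using iK rk(1) by (intro vv_add_ee) auto
    have req: "r = ee i + (r - ee i)"
      using ee_cancel[OF \<open>lookup r i \<noteq> 0\<close>] by (simp add: add.commute)
    have "keys (r - ee i) \<subseteq> keys r"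
      by (auto simp: in_keys_iff lookup_minus)
    then have "keys (r - ee i) \<subseteq> {vv (m + ee i)..<n}"
      using vvi iMin rk(1) by fastforce
    moreover have "mdeg n (m + ee i + (r - ee i)) \<le> d"
      using rk(2) req by (metis add.assoc)
    ultimately have "r - ee i \<in> Rset n d (m + ee i)" by (simp add: Rset_def)
    then show ?thesis using ichi req by blast
  qed (simp)
next
  fix r assume r: "r \<in> insert 0 (\<Union>i\<in>chi n d m. (\<lambda>r. ee i + r) ` Rset n d (m + ee i))"
  show "r \<in> Rset n d m"
  proof (cases "r = 0")
    case True then show ?thesis using m by (simp add: Rset_def Mset_def)
  next
    case False
    then obtain i r' where i: "i \<in> chi n d m" and r': "r' \<in> Rset n d (m + ee i)" and req: "r = ee i + r'"
      using r by auto
    have iv: "vv m \<le> i" "i < n" using i by (auto simp: chi_def split: if_splits)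
    have "keys r' \<subseteq> {i..<n}" "mdeg n (m + ee i + r') \<le> d"
      using r' vv_add_ee[OF iv(1)] by (auto simp: Rset_def)
    then show ?thesis using iv req by (auto simp: Rset_def keys_add_nat add.assoc)
  qed
qed

lemma H_rec:
  assumes m: "m \<in> Mset n d"
  shows "Hf n d \<gamma> y m = \<gamma> m + (\<Sum>i\<in>chi n d m. y i * Hf n d \<gamma> y (m + ee i))"
proof -
  let ?F = "\<lambda>r. \<gamma> (m + r) * Ymon y n r"
  let ?A = "\<lambda>i. (\<lambda>r. ee i + r) ` Rset n d (m + ee i)"
  have z: "0 \<notin> (\<Union>i\<in>chi n d m. ?A i)"
    using add_ee_nz by (auto simp: add.commute)
  have disj: "\<forall>i\<in>chi n d m. \<forall>j\<in>chi n d m. i \<noteq> j \<longrightarrow> ?A i \<inter> ?A j = {}"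
  proof (intro ballI impI)
    fix i j assume i: "i \<in> chi n d m" and j: "j \<in> chi n d m" and ij: "i \<noteq> j"
    have lk: "lookup (ee b + r) a = 0" if "a < b" "b \<in> chi n d m" "r \<in> Rset n d (m + ee b)" for a b r
    proof -
      have "vv m \<le> b" using that(2) by (auto simp: chi_def split: if_splits)
      then have "keys r \<subseteq> {b..<n}" using that(3) vv_add_ee by (auto simp: Rset_def)
      then have "a \<notin> keys r" using that(1) by auto
      then show ?thesis using that(1) by (simp add: lookup_add in_keys_iff lookup_single)
    qed
    show "?A i \<inter> ?A j = {}"
    proof (rule ccontr)
      assume "?A i \<inter> ?A j \<noteq> {}"
      then obtain r1 r2 where r1: "r1 \<in> Rset n d (m + ee i)" and r2: "r2 \<in> Rset n d (m + ee j)"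
        and eq: "ee i + r1 = ee j + r2" by blast
      have "lookup (ee i + r1) i \<noteq> 0" "lookup (ee j + r2) j \<noteq> 0" by (simp_all add: lookup_add)
      then show False using lk[OF _ i r1, of j] lk[OF _ j r2, of i] eq ij
        by (metis linorder_neqE_nat)
    qed
  qed
  have inj: "inj_on (\<lambda>r. ee i + r) S" for i S by (rule inj_onI) simp
  have "Hf n d \<gamma> y m = ?F 0 + sum ?F (\<Union>i\<in>chi n d m. ?A i)"
    unfolding Hf_def Rset_decomp[OF m] using z by (simp add: sum.insert)
  also have "sum ?F (\<Union>i\<in>chi n d m. ?A i) = (\<Sum>i\<in>chi n d m. sum ?F (?A i))"
    by (rule sum.UNION_disjoint[OF finite_chi _ disj]) auto
  also have "\<dots> = (\<Sum>i\<in>chi n d m. y i * Hf n d \<gamma> y (m + ee i))"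
  proof (rule sum.cong[OF refl])
    fix i assume i: "i \<in> chi n d m"
    then have "i < n" by (auto simp: chi_def split: if_splits)
    have "sum ?F (?A i) = (\<Sum>r\<in>Rset n d (m + ee i). ?F (ee i + r))"
      by (rule sum.reindex[OF inj, unfolded comp_def])
    also have "\<dots> = (\<Sum>r\<in>Rset n d (m + ee i). y i * (\<gamma> (m + ee i + r) * Ymon y n r))"
      by (rule sum.cong[OF refl]) (simp add: Ymon_add Ymon_ee[OF \<open>i < n\<close>] add.assoc mult_ac)
    also have "\<dots> = y i * Hf n d \<gamma> y (m + ee i)"
      by (simp add: Hf_def sum_distrib_left)
    finally show "sum ?F (?A i) = y i * Hf n d \<gamma> y (m + ee i)" .
  qed
  finally show ?thesis by simp
qed

definition Mi :: "nat \<Rightarrow> nat \<Rightarrow> nat \<Rightarrow> (nat \<Rightarrow>\<^sub>0 nat) set" where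
  "Mi n d i = {m \<in> Mset n d. m \<noteq> 0 \<and> vv m = i}"

lemma finite_Mi[simp]: "finite (Mi n d i)"
  by (rule finite_subset[OF _ finite_Mset[of n d]]) (auto simp: Mi_def)

definition low :: "(nat \<Rightarrow>\<^sub>0 nat) \<Rightarrow> nat \<Rightarrow> (nat \<Rightarrow>\<^sub>0 nat)" where
  "low m' i = (\<Sum>j<i. Poly_Mapping.single j (lookup m' j))"

lemma lookup_low: "lookup (low m' i) k = (if k < i then lookup m' k else 0)"
proof -
  have "lookup (low m' i) k = (\<Sum>j<i. if j = k then lookup m' j else 0)"
    by (simp add: low_def lookup_sum lookup_single when_def)
  also have "\<dots> = (if k < i then lookup m' k else 0)"
    by (simp add: sum.delta')
  finally show ?thesis .
qed

definition mk :: "(nat \<Rightarrow>\<^sub>0 nat) \<Rightarrow> nat \<Rightarrow> nat \<Rightarrow> (nat \<Rightarrow>\<^sub>0 nat)" where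
  "mk m' i t = low m' i + Poly_Mapping.single i t"

lemma lookup_mk: "lookup (mk m' i t) k = (if k < i then lookup m' k else if k = i then t else 0)"
  by (auto simp: mk_def lookup_add lookup_low lookup_single when_def)

lemma le_cancel_pm: "(\<And>j. lookup a j \<le> lookup b j) \<Longrightarrow> a + (b - a) = (b :: nat \<Rightarrow>\<^sub>0 nat)"
  by (rule poly_mapping_eqI) (simp add: lookup_add lookup_minus)

lemma fiber_card:
  assumes i: "i < n" and m': "m' \<in> Mset n d"
  shows "card {p \<in> Sigma (Mi n d i) (Rset n d). fst p + snd p = m'} = lookup m' i"
proof -
  let ?f = "\<lambda>t. (mk m' i t, m' - mk m' i t)"
  have m'k: "keys m' \<subseteq> {..<n}" "mdeg n m' \<le> d" using m' by (auto simp: Mset_def)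
  have eq: "{p \<in> Sigma (Mi n d i) (Rset n d). fst p + snd p = m'} = ?f ` {1..lookup m' i}"
  proof (rule Set.set_eqI, rule iffI)
    fix p assume p: "p \<in> {p \<in> Sigma (Mi n d i) (Rset n d). fst p + snd p = m'}"
    obtain m r where pe: "p = (m, r)" by (cases p)
    have mM: "m \<in> Mset n d" "m \<noteq> 0" "vv m = i" and rR: "r \<in> Rset n d m" and sm: "m + r = m'"
      using p by (auto simp: pe Mi_def)
    have rk: "keys r \<subseteq> {i..<n}" using rR mM by (auto simp: Rset_def)
    define t where "t = lookup m i"
    have "m = mk m' i t"
    proof (rule poly_mapping_eqI)
      fix k
      show "lookup m k = lookup (mk m' i t) k"
      proof (cases "k < i")
        case True
        then have "k \<notin> keys r" using rk by auto
        then show ?thesis using True sm by (auto simp: lookup_mk in_keys_iff lookup_add dest: sym)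
      next
        case False
        show ?thesis
        proof (cases "k = i")
          case True then show ?thesis by (simp add: lookup_mk t_def)
        next
          case False
          then have "k > i" using \<open>\<not> k < i\<close> by simp
          then have "k \<notin> keys m" using le_vv[of k m] mM by force
          then show ?thesis using \<open>k > i\<close> by (simp add: lookup_mk in_keys_iff)
        qed
      qed
    qed
    moreover have "r = m' - m"
      using sm by (auto intro!: poly_mapping_eqI simp: lookup_minus lookup_add)
    moreover have "1 \<le> t"
      using vv_in_keys[OF mM(2)] mM(3) by (simp add: t_def in_keys_iff)
    moreover have "t \<le> lookup m' i"
      using sm by (auto simp: t_def lookup_add)
    ultimately show "p \<in> ?f ` {1..lookup m' i}" using pe by auto
  next
    fix p assume "p \<in> ?f ` {1..lookup m' i}"
    then obtain t where t: "1 \<le> t" "t \<le> lookup m' i" and pe: "p = ?f t" by auto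
    let ?m = "mk m' i t"
    have le: "\<And>j. lookup ?m j \<le> lookup m' j" using t by (simp add: lookup_mk)
    have keysm: "\<And>j. j \<in> keys ?m \<Longrightarrow> j \<le> i"
      by (auto simp: in_keys_iff lookup_mk split: if_splits)
    have ik: "i \<in> keys ?m" using t by (simp add: in_keys_iff lookup_mk)
    have nz: "?m \<noteq> 0" using ik by auto
    have vvm: "vv ?m = i" using nz ik keysm by (auto simp: vv_def intro!: Max_eqI)
    have mM: "?m \<in> Mset n d"
      using keysm i mdeg_mono[OF le, of n] m'k(2) by (force simp: Mset_def)
    have sm: "?m + (m' - ?m) = m'" by (rule le_cancel_pm[OF le])
    have "keys (m' - ?m) \<subseteq> {i..<n}"
    proof
      fix j assume j: "j \<in> keys (m' - ?m)"
      then have "lookup m' j \<noteq> 0" "\<not> j < i"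
        by (auto simp: in_keys_iff lookup_minus lookup_mk split: if_splits)
      moreover have "j \<in> keys m'" using \<open>lookup m' j \<noteq> 0\<close> by (simp add: in_keys_iff)
      ultimately show "j \<in> {i..<n}" using m'k(1) by auto
    qed
    then have "m' - ?m \<in> Rset n d ?m" using sm m'k(2) vvm by (simp add: Rset_def)
    then show "p \<in> {p \<in> Sigma (Mi n d i) (Rset n d). fst p + snd p = m'}"
      using pe mM nz vvm sm by (auto simp: Mi_def)
  qed
  have inj: "inj_on ?f {1..lookup m' i}"
  proof (rule inj_onI)
    fix s t assume "?f s = ?f t"
    then have "lookup (mk m' i s) i = lookup (mk m' i t) i" by simp
    then show "s = t" by (simp add: lookup_mk)
  qed
  show ?thesis unfolding eq card_image[OF inj] by simp
qed

lemma grad: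
  assumes i: "i < n"
  shows "(\<Sum>m\<in>Mi n d i. Hf n d \<gamma> y m * Ymon y n (m - ee i)) =
         (\<Sum>m'\<in>Mset n d. \<gamma> m' * of_nat (lookup m' i) * Ymon y n (m' - ee i))"
proof -
  let ?G = "\<lambda>p. \<gamma> (fst p + snd p) * Ymon y n (fst p + snd p - ee i)"
  let ?S = "Sigma (Mi n d i) (Rset n d)"
  have "(\<Sum>m\<in>Mi n d i. Hf n d \<gamma> y m * Ymon y n (m - ee i)) =
        (\<Sum>m\<in>Mi n d i. \<Sum>r\<in>Rset n d m. ?G (m, r))"
  proof (rule sum.cong[OF refl])
    fix m assume m: "m \<in> Mi n d i"
    then have "lookup m i \<noteq> 0" using vv_in_keys[of m] by (auto simp: Mi_def in_keys_iff)
    then have e: "r + (m - ee i) = m + r - ee i" for r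
      by (intro poly_mapping_eqI) (auto simp: lookup_add lookup_minus lookup_single when_def)
    show "Hf n d \<gamma> y m * Ymon y n (m - ee i) = (\<Sum>r\<in>Rset n d m. ?G (m, r))"
      unfolding Hf_def sum_distrib_right
      by (rule sum.cong[OF refl]) (simp add: mult.assoc flip: Ymon_add e)
  qed
  also have "\<dots> = sum ?G ?S"
    using sum.Sigma[of "Mi n d i" "Rset n d" "\<lambda>m r. ?G (m, r)"] by (simp add: split_def)
  also have "\<dots> = (\<Sum>m'\<in>Mset n d. sum ?G {p \<in> ?S. fst p + snd p = m'})"
  proof (rule sum.group[symmetric])
    show "finite ?S" by auto
    show "finite (Mset n d)" by simp
    show "(\<lambda>p. fst p + snd p) ` ?S \<subseteq> Mset n d"
    proof clarsimp
      fix m r assume "m \<in> Mi n d i" "r \<in> Rset n d m"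
      then show "m + r \<in> Mset n d" using Rset_sub[of n d m]
        by (auto simp: Mi_def Mset_def Rset_def keys_add_nat)
    qed
  qed
  also have "\<dots> = (\<Sum>m'\<in>Mset n d. \<gamma> m' * of_nat (lookup m' i) * Ymon y n (m' - ee i))"
  proof (rule sum.cong[OF refl])
    fix m' assume m': "m' \<in> Mset n d"
    have "sum ?G {p \<in> ?S. fst p + snd p = m'} = (\<Sum>p\<in>{p \<in> ?S. fst p + snd p = m'}. \<gamma> m' * Ymon y n (m' - ee i))"
      by (rule sum.cong) auto
    also have "\<dots> = of_nat (lookup m' i) * (\<gamma> m' * Ymon y n (m' - ee i))"
      using fiber_card[OF i m'] by simp
    finally show "sum ?G {p \<in> ?S. fst p + snd p = m'} = \<gamma> m' * of_nat (lookup m' i) * Ymon y n (m' - ee i)"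
      by (simp add: mult_ac)
  qed
  finally show ?thesis .
qed

lemma chi_card: "(\<Sum>m\<in>Mset n d. card (chi n d m)) \<le> card (Mset n d)"
proof -
  have "(\<Sum>m\<in>Mset n d. card (chi n d m)) = card (Sigma (Mset n d) (chi n d))"
    by (simp add: card_SigmaI)
  also have "\<dots> \<le> card (Mset n d)"
  proof (rule card_inj_on_le[where f="\<lambda>p. fst p + ee (snd p)"])
    show "inj_on (\<lambda>p. fst p + ee (snd p)) (Sigma (Mset n d) (chi n d))"
    proof (rule inj_onI, clarsimp)
      fix m i m2 j
      assume a: "m \<in> Mset n d" "i \<in> chi n d m" "m2 \<in> Mset n d" "j \<in> chi n d m2" "m + ee i = m2 + ee j"
      have "vv m \<le> i" "vv m2 \<le> j" using a by (auto simp: chi_def split: if_splits)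
      then have "i = j" using a(5) vv_add_ee by metis
      then show "m = m2 \<and> i = j" using a(5) by simp
    qed
    show "(\<lambda>p. fst p + ee (snd p)) ` Sigma (Mset n d) (chi n d) \<subseteq> Mset n d"
      by (auto simp: chi_def split: if_splits intro!: Mset_add_ee)
  qed simp
  finally show ?thesis .
qed

lemma Mi_card: "(\<Sum>i<n. card (Mi n d i)) \<le> card (Mset n d)"
proof -
  have "(\<Sum>i<n. card (Mi n d i)) = card (Sigma {..<n} (Mi n d))"
    by (simp add: card_SigmaI)
  also have "\<dots> \<le> card (Mset n d)"
  proof (rule card_inj_on_le[where f=snd])
    show "inj_on snd (Sigma {..<n} (Mi n d))"
      by (rule inj_onI) (auto simp: Mi_def)
    show "snd ` Sigma {..<n} (Mi n d) \<subseteq> Mset n d" by (auto simp: Mi_def)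
  qed simp
  finally show ?thesis .
qed

lemma count_lemma:
  assumes fin: "finite I" and g: "good N B \<Gamma>" and B: "0 \<le> B"
    and ops: "\<And>i. i \<in> I \<Longrightarrow> opnd N B \<Gamma> (h i)"
    and qQ: "\<And>i. i \<in> I \<Longrightarrow> q i \<le> Q"
  shows "\<exists>\<Gamma>'. ext N B \<Gamma> \<Gamma>' (card I + 3 * Q) \<and> opnd N B \<Gamma>' (\<Sum>i\<in>I. of_nat (q i) * h i)"
proof -
  define T where "T v = (\<Sum>i\<in>{i\<in>I. v \<le> q i}. h i)" for v
  define R where "R v = (\<Sum>i\<in>I. of_nat (q i + 1 - v) * h i)" for v
  define P where "P v \<longleftrightarrow> (\<exists>\<Gamma>'. ext N B \<Gamma> \<Gamma>' (card {i\<in>I. v \<le> q i} + 3 * (Q + 1 - v))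
                \<and> opnd N B \<Gamma>' (T v) \<and> opnd N B \<Gamma>' (R v))" for v
  have "P 1"
  proof (rule inc_induct[of 1 "Q + 1"])
    show "1 \<le> Q + 1" by simp
  next
    have e1: "{i\<in>I. Q + 1 \<le> q i} = {}" using qQ by force
    have "T (Q + 1) = 0" by (simp add: T_def e1)
    moreover have "R (Q + 1) = 0" unfolding R_def
      by (rule sum.neutral) (use qQ in auto)
    ultimately show "P (Q + 1)" unfolding P_def
    proof (intro exI conjI)
      show "ext N B \<Gamma> \<Gamma> (card {i\<in>I. Q + 1 \<le> q i} + 3 * (Q + 1 - (Q + 1)))"
        using ext_refl[OF g] by (simp only: e1 card.empty) simp
    qed (simp_all add: opnd_0[OF B])
  next
    fix v assume v: "1 \<le> v" "v < Q + 1" and IH: "P (Suc v)"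
    then obtain \<Gamma>1 where G1: "ext N B \<Gamma> \<Gamma>1 (card {i\<in>I. Suc v \<le> q i} + 3 * (Q + 1 - Suc v))"
      "opnd N B \<Gamma>1 (T (Suc v))" "opnd N B \<Gamma>1 (R (Suc v))" unfolding P_def by blast
    have finv: "finite {i\<in>I. q i = v}" using fin by simp
    obtain \<Gamma>2 where G2: "ext N B \<Gamma>1 \<Gamma>2 (card {i\<in>I. q i = v} + 1)" "(\<Sum>i\<in>{i\<in>I. q i = v}. h i) \<in> av \<Gamma>2"
      using sum_lemma[OF finv ext_good[OF G1(1)] B, of h] ops ext_opnd[OF G1(1)] by blast
    have "\<exists>\<Gamma>'. ext N B \<Gamma>2 \<Gamma>' 1 \<and> op_apply OAdd (T (Suc v)) (\<Sum>i\<in>{i\<in>I. q i = v}. h i) \<in> av \<Gamma>'"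
      by (rule emit[OF ext_good[OF G2(1)]]) (use G1(2) G2 ext_opnd opnd_av in blast)+
    then obtain \<Gamma>3 where G3: "ext N B \<Gamma>2 \<Gamma>3 1" "T (Suc v) + (\<Sum>i\<in>{i\<in>I. q i = v}. h i) \<in> av \<Gamma>3"
      by auto
    have Tv: "T v = T (Suc v) + (\<Sum>i\<in>{i\<in>I. q i = v}. h i)"
    proof -
      have "{i\<in>I. v \<le> q i} = {i\<in>I. Suc v \<le> q i} \<union> {i\<in>I. q i = v}" by auto
      moreover have "{i\<in>I. Suc v \<le> q i} \<inter> {i\<in>I. q i = v} = {}" by auto
      ultimately show ?thesis unfolding T_def using fin by (simp add: sum.union_disjoint)
    qed
    have "\<exists>\<Gamma>'. ext N B \<Gamma>3 \<Gamma>' 1 \<and> op_apply OAdd (R (Suc v)) (T v) \<in> av \<Gamma>'"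
      by (rule emit[OF ext_good[OF G3(1)]])
         (use G1(3) G2(1) G3 Tv ext_opnd opnd_av ext_trans in metis)+
    then obtain \<Gamma>4 where G4: "ext N B \<Gamma>3 \<Gamma>4 1" "R (Suc v) + T v \<in> av \<Gamma>4"
      by auto
    have Rv: "R v = R (Suc v) + T v"
    proof -
      have "T v = (\<Sum>i\<in>I. if v \<le> q i then h i else 0)"
        unfolding T_def using fin by (simp add: sum.inter_filter)
      moreover have "of_nat (q i + 1 - v) * h i = of_nat (q i + 1 - Suc v) * h i + (if v \<le> q i then h i else 0)" for i
        using v(1) by (cases "v \<le> q i") (auto simp: of_nat_diff algebra_simps)
      ultimately show ?thesis unfolding R_def by (simp add: sum.distrib)
    qed
    have cardv: "card {i\<in>I. v \<le> q i} = card {i\<in>I. Suc v \<le> q i} + card {i\<in>I. q i = v}"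
    proof -
      have "{i\<in>I. v \<le> q i} = {i\<in>I. Suc v \<le> q i} \<union> {i\<in>I. q i = v}" by auto
      moreover have "{i\<in>I. Suc v \<le> q i} \<inter> {i\<in>I. q i = v} = {}" by auto
      ultimately show ?thesis using fin by (simp add: card_Un_disjoint)
    qed
    have "ext N B \<Gamma> \<Gamma>4 (card {i\<in>I. Suc v \<le> q i} + 3 * (Q + 1 - Suc v) + (card {i\<in>I. q i = v} + 1) + 1 + 1)"
      using ext_trans[OF ext_trans[OF ext_trans[OF G1(1) G2(1)] G3(1)] G4(1)] .
    moreover have "card {i\<in>I. Suc v \<le> q i} + 3 * (Q + 1 - Suc v) + (card {i\<in>I. q i = v} + 1) + 1 + 1
        = card {i\<in>I. v \<le> q i} + 3 * (Q + 1 - v)"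
      using cardv v by simp
    moreover have "opnd N B \<Gamma>4 (T v)" using G3(2) G4(1) Tv by (metis ext_opnd opnd_av)
    moreover have "opnd N B \<Gamma>4 (R v)" using G4(2) Rv by (simp add: opnd_av)
    ultimately show "P v" unfolding P_def by metis
  qed
  then obtain \<Gamma>' where G: "ext N B \<Gamma> \<Gamma>' (card {i\<in>I. 1 \<le> q i} + 3 * Q)" "opnd N B \<Gamma>' (R 1)"
    unfolding P_def by auto
  have "card {i\<in>I. 1 \<le> q i} \<le> card I" using fin by (intro card_mono) auto
  then have "ext N B \<Gamma> \<Gamma>' (card I + 3 * Q)" using G(1) ext_mono by fastforce
  moreover have "R 1 = (\<Sum>i\<in>I. of_nat (q i) * h i)" by (simp add: R_def)
  ultimately show ?thesis using G(2) by auto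
qed

lemma multiples_lemma:
  assumes g: "good N B \<Gamma>" and B: "0 \<le> B" and op: "opnd N B \<Gamma> h"
  shows "\<exists>\<Gamma>'. ext N B \<Gamma> \<Gamma>' (2 * Q + 1) \<and> (\<forall>v. \<bar>v\<bar> \<le> int Q \<longrightarrow> of_int v * h \<in> av \<Gamma>')"
proof (induction Q)
  case 0
  have "\<exists>\<Gamma>'. ext N B \<Gamma> \<Gamma>' 1 \<and> op_apply OMul 0 h \<in> av \<Gamma>'"
    by (rule emit[OF g opnd_0[OF B] op])
  then show ?case by auto
next
  case (Suc Q)
  then obtain \<Gamma>1 where G1: "ext N B \<Gamma> \<Gamma>1 (2 * Q + 1)" "\<forall>v. \<bar>v\<bar> \<le> int Q \<longrightarrow> of_int v * h \<in> av \<Gamma>1"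
    by blast
  have a1: "opnd N B \<Gamma>1 (of_int (int Q) * h)"
    by (rule opnd_av) (use G1(2)[rule_format, of "int Q"] in simp)
  have a2: "opnd N B \<Gamma>1 h" using op G1(1) ext_opnd by blast
  have "\<exists>\<Gamma>'. ext N B \<Gamma>1 \<Gamma>' 1 \<and> op_apply OAdd (of_int (int Q) * h) h \<in> av \<Gamma>'"
    by (rule emit[OF ext_good[OF G1(1)] a1 a2])
  then obtain \<Gamma>2 where G2: "ext N B \<Gamma>1 \<Gamma>2 1" "of_int (int Q) * h + h \<in> av \<Gamma>2" by auto
  have b1: "opnd N B \<Gamma>2 (of_int (- int Q) * h)"
    by (rule opnd_av, rule ext_av[OF G2(1)]) (use G1(2)[rule_format, of "- int Q"] in simp)
  have b2: "opnd N B \<Gamma>2 h" using a2 G2(1) ext_opnd by blast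
  have "\<exists>\<Gamma>'. ext N B \<Gamma>2 \<Gamma>' 1 \<and> op_apply OSub (of_int (- int Q) * h) h \<in> av \<Gamma>'"
    by (rule emit[OF ext_good[OF G2(1)] b1 b2])
  then obtain \<Gamma>3 where G3: "ext N B \<Gamma>2 \<Gamma>3 1" "of_int (- int Q) * h - h \<in> av \<Gamma>3" by auto
  have E: "ext N B \<Gamma> \<Gamma>3 (2 * Suc Q + 1)"
    using ext_trans[OF ext_trans[OF G1(1) G2(1)] G3(1)] by simp
  have "of_int v * h \<in> av \<Gamma>3" if v: "\<bar>v\<bar> \<le> int (Suc Q)" for v
  proof -
    consider "\<bar>v\<bar> \<le> int Q" | "v = int Q + 1" | "v = - int Q - 1" using v by linarith
    then show ?thesis
    proof cases
      case 1 then show ?thesis using G1(2) G2(1) G3(1) ext_av by blast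
    next
      case 2
      have "of_int v * h = of_int (int Q) * h + h" by (simp add: 2 algebra_simps)
      then show ?thesis using G2(2) G3(1) ext_av by metis
    next
      case 3
      have "of_int v * h = of_int (- int Q) * h - h" by (simp add: 3 algebra_simps)
      then show ?thesis using G3(2) by simp
    qed
  qed
  then show ?case using E by blast
qed

lemma ht_nonneg: "0 \<le> ht c"
proof (cases "c = 0")
  case False
  then have "1 \<le> \<bar>real_of_int c\<bar>" by linarith
  then have "0 \<le> ln \<bar>real_of_int c\<bar>" by (rule ln_ge_zero)
  then show ?thesis by (simp add: ht_def log_def)
qed simp

lemma ht_mono_int: "0 \<le> r \<Longrightarrow> r \<le> K \<Longrightarrow> ht r \<le> ht K"
proof (cases "r = 0")
  case True then show ?thesis using ht_nonneg[of K] by simp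
next
  case False
  assume a: "0 \<le> r" "r \<le> K"
  then have "0 < real_of_int r" "real_of_int r \<le> real_of_int K" using False by simp_all
  then have "ln \<bar>real_of_int r\<bar> \<le> ln \<bar>real_of_int K\<bar>" by simp
  then show ?thesis by (simp add: ht_def log_def divide_right_mono)
qed

lemma lin_comb_lemma:
  assumes fin: "finite I" and g: "good N B \<Gamma>" and B: "0 \<le> B"
    and ops: "\<And>i. i \<in> I \<Longrightarrow> opnd N B \<Gamma> (h i)"
    and K: "1 \<le> K" "ht K \<le> B"
    and w: "\<And>i. i \<in> I \<Longrightarrow> \<bar>w i\<bar> \<le> int Q * K"
  shows "\<exists>\<Gamma>'. ext N B \<Gamma> \<Gamma>' (4 * card I + 6 * Q + 5) \<and> (\<Sum>i\<in>I. of_int (w i) * h i) \<in> av \<Gamma>'"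
proof -
  define q where "q i = w i div K" for i
  define r where "r i = w i mod K" for i
  have wqr: "w i = K * q i + r i" for i by (simp add: q_def r_def)
  have qb: "\<bar>q i\<bar> \<le> int Q" if "i \<in> I" for i
  proof -
    have "- (int Q * K) \<le> w i" "w i \<le> int Q * K" using w[OF that] by auto
    have "q i \<le> (int Q * K) div K" unfolding q_def
      using \<open>w i \<le> int Q * K\<close> K(1) by (intro zdiv_mono1) auto
    then have "q i \<le> int Q" using K(1) by simp
    moreover have "(- int Q * K) div K \<le> q i" unfolding q_def
      using \<open>- (int Q * K) \<le> w i\<close> K(1) by (intro zdiv_mono1) auto
    moreover have "(- (int Q * K)) div K = - int Q"
    proof -
      have "- (int Q * K) = (- int Q) * K" by simp
      moreover have "((- int Q) * K) div K = - int Q"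
        by (rule nonzero_mult_div_cancel_right) (use K(1) in simp)
      ultimately show ?thesis by simp
    qed
    ultimately show ?thesis by simp
  qed
  have rb: "ht (r i) \<le> B" for i
  proof -
    have "0 \<le> r i" "r i \<le> K" using K(1) by (simp_all add: r_def less_imp_le)
    then show ?thesis using ht_mono_int K(2) by (meson order_trans)
  qed
  obtain \<Gamma>1 where G1: "ext N B \<Gamma> \<Gamma>1 (card I + 3 * Q)" "opnd N B \<Gamma>1 (\<Sum>i\<in>I. of_nat (nat (q i)) * h i)"
    using count_lemma[OF fin g B ops, where q="\<lambda>i. nat (q i)" and Q=Q] qb by fastforce
  obtain \<Gamma>2 where G2: "ext N B \<Gamma>1 \<Gamma>2 (card I + 3 * Q)" "opnd N B \<Gamma>2 (\<Sum>i\<in>I. of_nat (nat (- q i)) * h i)"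
    using count_lemma[OF fin ext_good[OF G1(1)] B, where h=h and q="\<lambda>i. nat (- q i)" and Q=Q] qb ops ext_opnd[OF G1(1)]
    by fastforce
  let ?D = "(\<Sum>i\<in>I. of_nat (nat (q i)) * h i) - (\<Sum>i\<in>I. of_nat (nat (- q i)) * h i)"
  have "\<exists>\<Gamma>'. ext N B \<Gamma>2 \<Gamma>' 1 \<and> op_apply OSub (\<Sum>i\<in>I. of_nat (nat (q i)) * h i) (\<Sum>i\<in>I. of_nat (nat (- q i)) * h i) \<in> av \<Gamma>'"
    by (rule emit[OF ext_good[OF G2(1)]]) (use G1(2) G2 ext_opnd in blast)+
  then obtain \<Gamma>3 where G3: "ext N B \<Gamma>2 \<Gamma>3 1" "?D \<in> av \<Gamma>3" by auto
  have "\<exists>\<Gamma>'. ext N B \<Gamma>3 \<Gamma>' 1 \<and> op_apply OMul (of_int K) ?D \<in> av \<Gamma>'"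
    by (rule emit[OF ext_good[OF G3(1)]]) (use G3 K opnd_const opnd_av in blast)+
  then obtain \<Gamma>4 where G4: "ext N B \<Gamma>3 \<Gamma>4 1" "of_int K * ?D \<in> av \<Gamma>4" by auto
  have E4: "ext N B \<Gamma> \<Gamma>4 (card I + 3 * Q + (card I + 3 * Q) + 1 + 1)"
    using ext_trans[OF ext_trans[OF ext_trans[OF G1(1) G2(1)] G3(1)] G4(1)] .
  have ops4: "\<And>i. i \<in> I \<Longrightarrow> opnd N B \<Gamma>4 (h i)" using ext_opnd[OF E4] ops by blast
  have rs4: "\<And>i. i \<in> I \<Longrightarrow> opnd N B \<Gamma>4 (of_int (r i))" using rb opnd_const by blast
  have "\<exists>\<Gamma>'. ext N B \<Gamma>4 \<Gamma>' (2 * card I + 1) \<and> (\<Sum>i\<in>I. of_int (r i) * h i) \<in> av \<Gamma>'"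
    by (rule sumprod_lemma[OF fin ext_good[OF G4(1)] B, where h="\<lambda>i. of_int (r i)" and k=h])
       (simp_all add: rs4 ops4)
  then obtain \<Gamma>5 where G5: "ext N B \<Gamma>4 \<Gamma>5 (2 * card I + 1)" "(\<Sum>i\<in>I. of_int (r i) * h i) \<in> av \<Gamma>5"
    by blast
  have "\<exists>\<Gamma>'. ext N B \<Gamma>5 \<Gamma>' 1 \<and> op_apply OAdd (of_int K * ?D) (\<Sum>i\<in>I. of_int (r i) * h i) \<in> av \<Gamma>'"
    by (rule emit[OF ext_good[OF G5(1)]]) (use G4 G5 ext_av opnd_av in blast)+
  then obtain \<Gamma>6 where G6: "ext N B \<Gamma>5 \<Gamma>6 1" "of_int K * ?D + (\<Sum>i\<in>I. of_int (r i) * h i) \<in> av \<Gamma>6" by auto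
  have E: "ext N B \<Gamma> \<Gamma>6 (4 * card I + 6 * Q + 5)"
    using ext_trans[OF ext_trans[OF ext_trans[OF ext_trans[OF ext_trans[OF G1(1) G2(1)] G3(1)] G4(1)] G5(1)] G6(1)]
    by (rule ext_mono) simp
  have "of_int K * ?D + (\<Sum>i\<in>I. of_int (r i) * h i) = (\<Sum>i\<in>I. of_int (w i) * h i)"
  proof -
    have "of_int (w i) * h i = of_int K * (of_nat (nat (q i)) * h i - of_nat (nat (- q i)) * h i) + of_int (r i) * h i" for i
    proof -
      have "(of_nat (nat (q i)) :: mpoly) - of_nat (nat (- q i)) = of_int (q i)"
        by (cases "q i \<ge> 0") (simp_all add: of_nat_nat)
      then show ?thesis by (simp add: wqr algebra_simps flip: left_diff_distrib)
    qed
    then have "(\<Sum>i\<in>I. of_int (w i) * h i) = (\<Sum>i\<in>I. of_int K * (of_nat (nat (q i)) * h i - of_nat (nat (- q i)) * h i) + of_int (r i) * h i)"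
      by (intro sum.cong) auto
    also have "\<dots> = of_int K * (\<Sum>i\<in>I. of_nat (nat (q i)) * h i - of_nat (nat (- q i)) * h i) + (\<Sum>i\<in>I. of_int (r i) * h i)"
      by (simp only: sum.distrib sum_distrib_left)
    also have "\<dots> = of_int K * ?D + (\<Sum>i\<in>I. of_int (r i) * h i)"
      by (simp only: sum_subtractf)
    finally show ?thesis by simp
  qed
  then show ?thesis using E G6(2) by auto
qed

lemma mdeg_0[simp]: "mdeg n 0 = 0"
  by (simp add: mdeg_def)

definition yv :: "int mat \<Rightarrow> nat \<Rightarrow> nat \<Rightarrow> mpoly" where
  "yv A n i = (\<Sum>k<n. of_int (A $$ (i, k)) * mVar k)"

lemma prod_keys_eq:
  fixes m :: "nat \<Rightarrow>\<^sub>0 nat" and n :: nat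
  assumes "keys m \<subseteq> {..<n}"
  shows "(\<Prod>i\<in>keys m. (\<sigma> i :: mpoly) ^ lookup m i) = (\<Prod>i<n. \<sigma> i ^ lookup m i)"
  by (rule prod.mono_neutral_left) (use assms in \<open>auto simp: in_keys_iff\<close>)

lemma trans_eq:
  assumes mv: "mvars g \<subseteq> {..<n}" and dg: "deg_le g d"
  shows "mtransform n A g = (\<Sum>m\<in>Mset n d. of_int (lookup g m) * Ymon (yv A n) n m)"
proof -
  have km: "\<And>m. m \<in> keys g \<Longrightarrow> keys m \<subseteq> {..<n}" using mv by (auto simp: mvars_def)
  have kM: "keys g \<subseteq> Mset n d"
  proof
    fix m assume m: "m \<in> keys g"
    then have "mon_deg m \<le> d" using dg by (auto simp: deg_le_def)
    then show "m \<in> Mset n d" using km[OF m] mon_deg_eq[OF km[OF m]] by (simp add: Mset_def)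
  qed
  have "mtransform n A g = (\<Sum>m\<in>keys g. of_int (lookup g m) * Ymon (yv A n) n m)"
    unfolding mtransform_def msubst_def
    by (rule sum.cong[OF refl]) (simp add: mConst_eq yv_def Ymon_def prod_keys_eq[OF km])
  also have "\<dots> = (\<Sum>m\<in>Mset n d. of_int (lookup g m) * Ymon (yv A n) n m)"
    by (rule sum.mono_neutral_left) (use kM in \<open>auto simp: in_keys_iff\<close>)
  finally show ?thesis .
qed

lemma deriv_yv: "k < n \<Longrightarrow> mpderiv k (yv A n i) = of_int (A $$ (i, k))"
proof -
  assume k: "k < n"
  have "mpderiv k (yv A n i) = (\<Sum>k'<n. of_int (A $$ (i, k')) * (if k' = k then 1 else 0))"
    unfolding yv_def deriv_sum by (simp add: deriv_cmul deriv_mVar)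
  also have "\<dots> = (\<Sum>k'<n. if k' = k then of_int (A $$ (i, k')) else 0)"
    by (rule sum.cong) auto
  also have "\<dots> = of_int (A $$ (i, k))" using k by (simp add: sum.delta)
  finally show ?thesis .
qed

lemma deriv_trans:
  assumes k: "k < n"
  shows "mpderiv k (\<Sum>m\<in>Mset n d. of_int (c m) * Ymon (yv A n) n m) =
    (\<Sum>m\<in>Mset n d. of_int (c m) * (\<Sum>i<n. of_nat (lookup m i) * Ymon (yv A n) n (m - ee i) * of_int (A $$ (i, k))))"
  by (simp add: deriv_sum deriv_cmul deriv_Ymon deriv_yv[OF k])

lemma mdeg_zero: "keys m \<subseteq> {..<n} \<Longrightarrow> mdeg n m = 0 \<Longrightarrow> m = 0"
proof (rule ccontr)
  assume a: "keys m \<subseteq> {..<n}" "mdeg n m = 0" "m \<noteq> 0"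
  then obtain j where j: "j \<in> keys m" by fastforce
  then have "j < n" using a by auto
  have "lookup m j \<le> mdeg n m" unfolding mdeg_def using \<open>j < n\<close> by (intro member_le_sum) auto
  then show False using a j by (simp add: in_keys_iff)
qed

lemma parent:
  assumes m: "m \<in> Mset n d" and nz: "m \<noteq> 0"
  shows "vv m < n" "m - ee (vv m) \<in> Mset n d" "mdeg n (m - ee (vv m)) + 1 = mdeg n m"
    "m = (m - ee (vv m)) + ee (vv m)"
proof -
  have vk: "vv m \<in> keys m" by (rule vv_in_keys[OF nz])
  have km: "keys m \<subseteq> {..<n}" "mdeg n m \<le> d" using m by (auto simp: Mset_def)
  show v: "vv m < n" using vk km by auto
  have lz: "lookup m (vv m) \<noteq> 0" using vk by (simp add: in_keys_iff)
  show eq: "m = (m - ee (vv m)) + ee (vv m)" using ee_cancel[OF lz] by simp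
  have "mdeg n m = mdeg n (m - ee (vv m)) + 1"
    using arg_cong[OF eq, of "mdeg n"] by (simp add: mdeg_add mdeg_ee[OF v])
  then show "mdeg n (m - ee (vv m)) + 1 = mdeg n m" by simp
  have "keys (m - ee (vv m)) \<subseteq> keys m" by (auto simp: in_keys_iff lookup_minus)
  then show "m - ee (vv m) \<in> Mset n d"
    using km \<open>mdeg n m = mdeg n (m - ee (vv m)) + 1\<close> by (auto simp: Mset_def)
qed

lemma Mset_minus_ee: "m \<in> Mset n d \<Longrightarrow> m - ee i \<in> Mset n d"
proof -
  assume m: "m \<in> Mset n d"
  have "keys (m - ee i) \<subseteq> keys m" by (auto simp: in_keys_iff lookup_minus)
  moreover have "mdeg n (m - ee i) \<le> mdeg n m" by (rule mdeg_mono) (simp add: lookup_minus)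
  ultimately show ?thesis using m by (auto simp: Mset_def)
qed

lemma Y_layers:
  fixes y :: "nat \<Rightarrow> mpoly"
  assumes g: "good N B \<Gamma>" and B: "0 \<le> B" and yav: "\<And>i. i < n \<Longrightarrow> opnd N B \<Gamma> (y i)"
  shows "\<exists>\<Gamma>'. ext N B \<Gamma> \<Gamma>' (card (Mset n d)) \<and> (\<forall>m\<in>Mset n d. opnd N B \<Gamma>' (Ymon y n m))"
proof -
  have "\<exists>\<Gamma>'. ext N B \<Gamma> \<Gamma>' (card {m\<in>Mset n d. m \<noteq> 0 \<and> mdeg n m \<le> t}) \<and>
          (\<forall>m\<in>Mset n d. mdeg n m \<le> t \<longrightarrow> opnd N B \<Gamma>' (Ymon y n m))" for t
  proof (induction t)
    case 0
    have e: "{m\<in>Mset n d. m \<noteq> 0 \<and> mdeg n m \<le> 0} = {}"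
      using mdeg_zero by (auto simp: Mset_def)
    have "\<forall>m\<in>Mset n d. mdeg n m \<le> 0 \<longrightarrow> opnd N B \<Gamma> (Ymon y n m)"
    proof (intro ballI impI)
      fix m assume "m \<in> Mset n d" "mdeg n m \<le> 0"
      then have "m = 0" using mdeg_zero by (auto simp: Mset_def)
      then show "opnd N B \<Gamma> (Ymon y n m)" using opnd_1[OF B] by simp
    qed
    then show ?case using ext_refl[OF g] by (intro exI[of _ \<Gamma>]) (simp only: e card.empty)
  next
    case (Suc t)
    then obtain \<Gamma>1 where G1: "ext N B \<Gamma> \<Gamma>1 (card {m\<in>Mset n d. m \<noteq> 0 \<and> mdeg n m \<le> t})"
      "\<forall>m\<in>Mset n d. mdeg n m \<le> t \<longrightarrow> opnd N B \<Gamma>1 (Ymon y n m)" by blast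
    let ?L = "{m\<in>Mset n d. mdeg n m = Suc t}"
    have finL: "finite ?L" by simp
    have "\<exists>\<Gamma>'. ext N B \<Gamma>1 \<Gamma>' (\<Sum>m\<in>?L. 1) \<and> (\<forall>m\<in>?L. (\<lambda>m S. Ymon y n m \<in> S) m (av \<Gamma>'))"
    proof (rule batch[OF finL ext_good[OF G1(1)]])
      fix m \<Gamma>2 assume m: "m \<in> ?L" and g2: "good N B \<Gamma>2" and s2: "av \<Gamma>1 \<subseteq> av \<Gamma>2"
      have nz: "m \<noteq> 0" using m by (auto simp: mdeg_def)
      note par = parent[OF _ nz]
      have mM: "m \<in> Mset n d" and md: "mdeg n m = Suc t" using m by auto
      have pm: "m - ee (vv m) \<in> Mset n d" "mdeg n (m - ee (vv m)) \<le> t"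
        using par(2)[OF mM] par(3)[OF mM] md by auto
      have o1: "opnd N B \<Gamma>2 (Ymon y n (m - ee (vv m)))"
        using G1(2) pm s2 opnd_mono by blast
      have "opnd N B \<Gamma>1 (y (vv m))" using yav[OF par(1)[OF mM]] G1(1) ext_opnd by blast
      then have o2: "opnd N B \<Gamma>2 (y (vv m))" using s2 opnd_mono by blast
      have "Ymon y n m = Ymon y n (m - ee (vv m) + ee (vv m))" using par(4)[OF mM] by simp
      also have "\<dots> = Ymon y n (m - ee (vv m)) * y (vv m)"
        by (simp only: Ymon_add Ymon_ee[OF par(1)[OF mM]])
      finally have "Ymon y n m = Ymon y n (m - ee (vv m)) * y (vv m)" .
      then show "\<exists>\<Gamma>3. ext N B \<Gamma>2 \<Gamma>3 1 \<and> (\<lambda>m S. Ymon y n m \<in> S) m (av \<Gamma>3)"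
        using emit[OF g2 o1 o2, of OMul] by simp
    qed auto
    then obtain \<Gamma>2 where G2: "ext N B \<Gamma>1 \<Gamma>2 (card ?L)" "\<forall>m\<in>?L. Ymon y n m \<in> av \<Gamma>2" by auto
    have cs: "card {m\<in>Mset n d. m \<noteq> 0 \<and> mdeg n m \<le> Suc t} = card {m\<in>Mset n d. m \<noteq> 0 \<and> mdeg n m \<le> t} + card ?L"
    proof -
      have "{m\<in>Mset n d. m \<noteq> 0 \<and> mdeg n m \<le> Suc t} = {m\<in>Mset n d. m \<noteq> 0 \<and> mdeg n m \<le> t} \<union> ?L"
        using mdeg_zero by (auto simp: Mset_def)
      moreover have "{m\<in>Mset n d. m \<noteq> 0 \<and> mdeg n m \<le> t} \<inter> ?L = {}" by auto
      ultimately show ?thesis by (simp add: card_Un_disjoint)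
    qed
    have "\<forall>m\<in>Mset n d. mdeg n m \<le> Suc t \<longrightarrow> opnd N B \<Gamma>2 (Ymon y n m)"
    proof (intro ballI impI)
      fix m assume "m \<in> Mset n d" "mdeg n m \<le> Suc t"
      then consider "mdeg n m \<le> t" | "m \<in> ?L" by fastforce
      then show "opnd N B \<Gamma>2 (Ymon y n m)"
        by cases (use G1(2) G2 \<open>m \<in> Mset n d\<close> ext_opnd opnd_av in blast)+
    qed
    then show ?case using ext_trans[OF G1(1) G2(1)] cs by auto
  qed
  from this[of d] obtain \<Gamma>' where G: "ext N B \<Gamma> \<Gamma>' (card {m\<in>Mset n d. m \<noteq> 0 \<and> mdeg n m \<le> d})"
    "\<forall>m\<in>Mset n d. mdeg n m \<le> d \<longrightarrow> opnd N B \<Gamma>' (Ymon y n m)" by blast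
  have "card {m\<in>Mset n d. m \<noteq> 0 \<and> mdeg n m \<le> d} \<le> card (Mset n d)" by (intro card_mono) auto
  then have "ext N B \<Gamma> \<Gamma>' (card (Mset n d))" using G(1) ext_mono by blast
  moreover have "\<forall>m\<in>Mset n d. opnd N B \<Gamma>' (Ymon y n m)" using G(2) by (auto simp: Mset_def)
  ultimately show ?thesis by blast
qed


lemma H_layers:
  fixes y :: "nat \<Rightarrow> mpoly" and \<gamma> :: "(nat \<Rightarrow>\<^sub>0 nat) \<Rightarrow> mpoly"
  assumes g: "good N B \<Gamma>" and B: "0 \<le> B" and yav: "\<And>i. i < n \<Longrightarrow> opnd N B \<Gamma> (y i)"
    and gav: "\<And>m. m \<in> Mset n d \<Longrightarrow> opnd N B \<Gamma> (\<gamma> m)"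
  shows "\<exists>\<Gamma>'. ext N B \<Gamma> \<Gamma>' (4 * card (Mset n d)) \<and> (\<forall>m\<in>Mset n d. opnd N B \<Gamma>' (Hf n d \<gamma> y m))"
proof -
  define c where "c m = 2 * card (chi n d m) + 2" for m
  define P where "P t \<longleftrightarrow> (\<exists>\<Gamma>'. ext N B \<Gamma> \<Gamma>' (\<Sum>m\<in>{m\<in>Mset n d. t \<le> mdeg n m}. c m) \<and>
                    (\<forall>m\<in>Mset n d. t \<le> mdeg n m \<longrightarrow> opnd N B \<Gamma>' (Hf n d \<gamma> y m)))" for t
  have "P 0"
  proof (rule inc_induct[of 0 "Suc d"])
    show "0 \<le> Suc d" by simp
  next
    have e: "{m\<in>Mset n d. Suc d \<le> mdeg n m} = {}" by (auto simp: Mset_def)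
    show "P (Suc d)" unfolding P_def
    proof (intro exI[of _ \<Gamma>] conjI)
      show "ext N B \<Gamma> \<Gamma> (\<Sum>m\<in>{m\<in>Mset n d. Suc d \<le> mdeg n m}. c m)"
        using ext_refl[OF g] by (simp only: e sum.empty)
    qed (auto simp: Mset_def)
  next
    fix t assume t: "0 \<le> t" "t < Suc d" and IH: "P (Suc t)"
    then obtain \<Gamma>1 where G1: "ext N B \<Gamma> \<Gamma>1 (\<Sum>m\<in>{m\<in>Mset n d. Suc t \<le> mdeg n m}. c m)"
      "\<forall>m\<in>Mset n d. Suc t \<le> mdeg n m \<longrightarrow> opnd N B \<Gamma>1 (Hf n d \<gamma> y m)" unfolding P_def by blast
    let ?L = "{m\<in>Mset n d. mdeg n m = t}"
    have finL: "finite ?L" by simp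
    have "\<exists>\<Gamma>'. ext N B \<Gamma>1 \<Gamma>' (\<Sum>m\<in>?L. c m) \<and> (\<forall>m\<in>?L. (\<lambda>m S. Hf n d \<gamma> y m \<in> S) m (av \<Gamma>'))"
    proof (rule batch[OF finL ext_good[OF G1(1)]])
      fix m \<Gamma>2 assume m: "m \<in> ?L" and g2: "good N B \<Gamma>2" and s2: "av \<Gamma>1 \<subseteq> av \<Gamma>2"
      have mM: "m \<in> Mset n d" and md: "mdeg n m = t" using m by auto
      have o1: "opnd N B \<Gamma>2 (y i)" if "i \<in> chi n d m" for i
      proof -
        have "i < n" using that by (auto simp: chi_def split: if_splits)
        then show ?thesis using yav G1(1) s2 ext_opnd opnd_mono by blast
      qed
      have o2: "opnd N B \<Gamma>2 (Hf n d \<gamma> y (m + ee i))" if "i \<in> chi n d m" for i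
      proof -
        have "i < n" "mdeg n m < d" using that by (auto simp: chi_def split: if_splits)
        then have "m + ee i \<in> Mset n d" "mdeg n (m + ee i) = Suc t"
          using Mset_add_ee[OF mM] md by (auto simp: mdeg_add mdeg_ee)
        then show ?thesis using G1(2) s2 opnd_mono by fastforce
      qed
      have "\<exists>\<Gamma>'. ext N B \<Gamma>2 \<Gamma>' (2 * card (chi n d m) + 1) \<and> (\<Sum>i\<in>chi n d m. y i * Hf n d \<gamma> y (m + ee i)) \<in> av \<Gamma>'"
        by (rule sumprod_lemma[OF finite_chi g2 B]) (simp_all add: o1 o2)
      then obtain \<Gamma>3 where G3: "ext N B \<Gamma>2 \<Gamma>3 (2 * card (chi n d m) + 1)"
        "(\<Sum>i\<in>chi n d m. y i * Hf n d \<gamma> y (m + ee i)) \<in> av \<Gamma>3" by blast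
      have og: "opnd N B \<Gamma>3 (\<gamma> m)"
        using gav[OF mM] G1(1) s2 G3(1) ext_opnd opnd_mono by blast
      have "\<exists>\<Gamma>'. ext N B \<Gamma>3 \<Gamma>' 1 \<and> op_apply OAdd (\<gamma> m) (\<Sum>i\<in>chi n d m. y i * Hf n d \<gamma> y (m + ee i)) \<in> av \<Gamma>'"
        by (rule emit[OF ext_good[OF G3(1)] og opnd_av[OF G3(2)]])
      then obtain \<Gamma>4 where G4: "ext N B \<Gamma>3 \<Gamma>4 1" "Hf n d \<gamma> y m \<in> av \<Gamma>4"
        using H_rec[OF mM, of \<gamma> y] by auto
      show "\<exists>\<Gamma>4. ext N B \<Gamma>2 \<Gamma>4 (c m) \<and> (\<lambda>m S. Hf n d \<gamma> y m \<in> S) m (av \<Gamma>4)"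
        using ext_trans[OF G3(1) G4(1)] G4(2) by (auto simp: c_def)
    qed auto
    then obtain \<Gamma>2 where G2: "ext N B \<Gamma>1 \<Gamma>2 (\<Sum>m\<in>?L. c m)" "\<forall>m\<in>?L. Hf n d \<gamma> y m \<in> av \<Gamma>2" by auto
    have cs: "(\<Sum>m\<in>{m\<in>Mset n d. t \<le> mdeg n m}. c m) = (\<Sum>m\<in>{m\<in>Mset n d. Suc t \<le> mdeg n m}. c m) + (\<Sum>m\<in>?L. c m)"
    proof -
      have "{m\<in>Mset n d. t \<le> mdeg n m} = {m\<in>Mset n d. Suc t \<le> mdeg n m} \<union> ?L" by auto
      moreover have "{m\<in>Mset n d. Suc t \<le> mdeg n m} \<inter> ?L = {}" by auto
      ultimately show ?thesis by (simp add: sum.union_disjoint)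
    qed
    have "\<forall>m\<in>Mset n d. t \<le> mdeg n m \<longrightarrow> opnd N B \<Gamma>2 (Hf n d \<gamma> y m)"
    proof (intro ballI impI)
      fix m assume "m \<in> Mset n d" "t \<le> mdeg n m"
      then consider "Suc t \<le> mdeg n m" | "m \<in> ?L" by fastforce
      then show "opnd N B \<Gamma>2 (Hf n d \<gamma> y m)"
        by cases (use G1(2) G2 \<open>m \<in> Mset n d\<close> ext_opnd opnd_av in blast)+
    qed
    then show "P t" unfolding P_def using ext_trans[OF G1(1) G2(1)] cs by auto
  qed
  then obtain \<Gamma>' where G: "ext N B \<Gamma> \<Gamma>' (\<Sum>m\<in>Mset n d. c m)" "\<forall>m\<in>Mset n d. opnd N B \<Gamma>' (Hf n d \<gamma> y m)"
    unfolding P_def by auto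
  have "(\<Sum>m\<in>Mset n d. c m) = 2 * (\<Sum>m\<in>Mset n d. card (chi n d m)) + 2 * card (Mset n d)"
    unfolding c_def sum.distrib sum_distrib_left[symmetric] by simp
  also have "\<dots> \<le> 4 * card (Mset n d)" using chi_card[of n d] by simp
  finally show ?thesis using G ext_mono by blast
qed

lemma E_step:
  fixes y :: "nat \<Rightarrow> mpoly" and \<gamma> :: "(nat \<Rightarrow>\<^sub>0 nat) \<Rightarrow> mpoly"
  assumes g: "good N B \<Gamma>" and B: "0 \<le> B"
    and Hav: "\<And>m. m \<in> Mset n d \<Longrightarrow> opnd N B \<Gamma> (Hf n d \<gamma> y m)"
    and Yav: "\<And>m. m \<in> Mset n d \<Longrightarrow> opnd N B \<Gamma> (Ymon y n m)"
  shows "\<exists>\<Gamma>'. ext N B \<Gamma> \<Gamma>' (2 * card (Mset n d) + n) \<and>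
     (\<forall>i<n. (\<Sum>m\<in>Mi n d i. Hf n d \<gamma> y m * Ymon y n (m - ee i)) \<in> av \<Gamma>')"
proof -
  have "\<exists>\<Gamma>'. ext N B \<Gamma> \<Gamma>' (\<Sum>i<n. 2 * card (Mi n d i) + 1) \<and>
     (\<forall>i\<in>{..<n}. (\<lambda>i S. (\<Sum>m\<in>Mi n d i. Hf n d \<gamma> y m * Ymon y n (m - ee i)) \<in> S) i (av \<Gamma>'))"
  proof (rule batch[OF finite_lessThan g])
    fix i \<Gamma>1 assume g1: "good N B \<Gamma>1" and s1: "av \<Gamma> \<subseteq> av \<Gamma>1"
    have o1: "opnd N B \<Gamma>1 (Hf n d \<gamma> y m)" if "m \<in> Mi n d i" for m
      using that by (intro opnd_mono[OF Hav s1]) (simp add: Mi_def)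
    have o2: "opnd N B \<Gamma>1 (Ymon y n (m - ee i))" if "m \<in> Mi n d i" for m
      using that by (intro opnd_mono[OF Yav s1] Mset_minus_ee) (simp add: Mi_def)
    show "\<exists>\<Gamma>2. ext N B \<Gamma>1 \<Gamma>2 (2 * card (Mi n d i) + 1) \<and>
         (\<lambda>i S. (\<Sum>m\<in>Mi n d i. Hf n d \<gamma> y m * Ymon y n (m - ee i)) \<in> S) i (av \<Gamma>2)"
      using sumprod_lemma[OF finite_Mi g1 B, of n d i "\<lambda>m. Hf n d \<gamma> y m" "\<lambda>m. Ymon y n (m - ee i)"] o1 o2
      by blast
  qed auto
  then obtain \<Gamma>' where G: "ext N B \<Gamma> \<Gamma>' (\<Sum>i<n. 2 * card (Mi n d i) + 1)"
    "\<forall>i<n. (\<Sum>m\<in>Mi n d i. Hf n d \<gamma> y m * Ymon y n (m - ee i)) \<in> av \<Gamma>'" by auto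
  have "(\<Sum>i<n. 2 * card (Mi n d i) + 1) = 2 * (\<Sum>i<n. card (Mi n d i)) + n"
    by (simp add: sum.distrib sum_distrib_left)
  also have "\<dots> \<le> 2 * card (Mset n d) + n" using Mi_card[of n d] by simp
  finally show ?thesis using G ext_mono by blast
qed

lemma S_identity:
  assumes k: "k < n" and fh: "\<And>j. j < p \<Longrightarrow> mvars (f ! j) \<subseteq> {..<n} \<and> deg_le (f ! j) d"
  shows "(\<Sum>j<p. mVar (n + j) * mpderiv k (mtransform n A (f ! j))) =
    (\<Sum>i<n. of_int (A $$ (i, k)) *
      (\<Sum>m\<in>Mi n d i. Hf n d (\<lambda>m. \<Sum>j<p. of_int (lookup (f ! j) m) * mVar (n + j)) (yv A n) m * Ymon (yv A n) n (m - ee i)))"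
proof -
  let ?Y = "Ymon (yv A n) n"
  let ?g = "\<lambda>m. \<Sum>j<p. of_int (lookup (f ! j) m) * mVar (n + j)"
  let ?T = "\<lambda>i m j. of_int (A $$ (i, k)) * (of_int (lookup (f ! j) m) * mVar (n + j) * of_nat (lookup m i) * ?Y (m - ee i))"
  have "(\<Sum>j<p. mVar (n + j) * mpderiv k (mtransform n A (f ! j))) =
        (\<Sum>j<p. mVar (n + j) * (\<Sum>m\<in>Mset n d. of_int (lookup (f ! j) m) * (\<Sum>i<n. of_nat (lookup m i) * ?Y (m - ee i) * of_int (A $$ (i, k)))))"
  proof (rule sum.cong[OF refl])
    fix j assume "j \<in> {..<p}"
    then have "mvars (f ! j) \<subseteq> {..<n}" "deg_le (f ! j) d" using fh by auto
    then show "mVar (n + j) * mpderiv k (mtransform n A (f ! j)) =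
      mVar (n + j) * (\<Sum>m\<in>Mset n d. of_int (lookup (f ! j) m) * (\<Sum>i<n. of_nat (lookup m i) * ?Y (m - ee i) * of_int (A $$ (i, k))))"
      by (simp add: trans_eq deriv_trans[OF k])
  qed
  also have "\<dots> = (\<Sum>j<p. \<Sum>m\<in>Mset n d. \<Sum>i<n. ?T i m j)"
    by (simp add: sum_distrib_left mult_ac)
  also have "\<dots> = (\<Sum>j<p. \<Sum>i<n. \<Sum>m\<in>Mset n d. ?T i m j)"
    by (rule sum.cong[OF refl], rule sum.swap)
  also have "\<dots> = (\<Sum>i<n. \<Sum>j<p. \<Sum>m\<in>Mset n d. ?T i m j)"
    by (rule sum.swap)
  also have "\<dots> = (\<Sum>i<n. \<Sum>m\<in>Mset n d. \<Sum>j<p. ?T i m j)"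
    by (rule sum.cong[OF refl], rule sum.swap)
  also have "\<dots> = (\<Sum>i<n. of_int (A $$ (i, k)) * (\<Sum>m\<in>Mset n d. ?g m * of_nat (lookup m i) * ?Y (m - ee i)))"
    by (simp add: sum_distrib_left sum_distrib_right mult_ac)
  also have "\<dots> = (\<Sum>i<n. of_int (A $$ (i, k)) * (\<Sum>m\<in>Mi n d i. Hf n d ?g (yv A n) m * ?Y (m - ee i)))"
    by (rule sum.cong[OF refl]) (simp add: grad)
  finally show ?thesis .
qed

lemma Mset_mono: "d' \<le> d \<Longrightarrow> Mset n d' \<subseteq> Mset n d"
  by (auto simp: Mset_def)

lemma n_le_Mn: "1 \<le> d \<Longrightarrow> n \<le> card (Mset n d)"
proof -
  assume "1 \<le> d"
  then have "card (Mset n 1) \<le> card (Mset n d)" by (intro card_mono finite_Mset Mset_mono)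
  moreover have "card (Mset n 1) = n + 1" by (simp add: card_Mset choose_one)
  ultimately show ?thesis by simp
qed

lemma nn_le_choose2: "n * n \<le> 2 * ((n + 2) choose 2)"
proof (induction n)
  case 0 then show ?case by simp
next
  case (Suc n)
  have e: "(Suc n + 2) choose 2 = (n + 2) + ((n + 2) choose 2)" by (simp add: numeral_2_eq_2)
  have "Suc n * Suc n = n * n + 2 * n + 1" by simp
  then show ?case using e Suc.IH by linarith
qed

lemma nn_le_Mn: "2 \<le> d \<Longrightarrow> n * n \<le> 2 * card (Mset n d)"
proof -
  assume "2 \<le> d"
  then have "card (Mset n 2) \<le> card (Mset n d)" by (intro card_mono finite_Mset Mset_mono)
  moreover have "card (Mset n 2) = (n + 2) choose 2" by (simp add: card_Mset)
  ultimately show ?thesis using nn_le_choose2[of n] by linarith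
qed

lemma Mn_pos: "1 \<le> card (Mset n d)"
proof -
  have "0 \<in> Mset n d" by (simp add: Mset_def)
  then have "0 < card (Mset n d)" by (auto simp: card_gt_0_iff)
  then show ?thesis by simp
qed

lemma general_case:
  assumes d2: "2 \<le> d" and n1: "1 \<le> n" and p1: "1 \<le> p" and lf: "length f = p" and lu: "length u = p"
    and fh: "\<forall>i<p. mvars (f ! i) \<subseteq> {..<n} \<and> deg_le (f ! i) d \<and> poly_ht_le (f ! i) b \<and> ht (u ! i) \<le> b"
    and Ah: "\<forall>i<n. \<forall>j<n. ht (A $$ (i, j)) \<le> b"
    and b0: "0 \<le> b"
  shows "\<exists>\<Gamma>. good (n + p) (2 * b) \<Gamma> \<and> length \<Gamma> \<le> 30 * (p * card (Mset n d)) \<and> set (target_system n A f u) \<subseteq> av \<Gamma>"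
proof -
  define N where "N = n + p"
  define B where "B = 2 * b"
  define Mn where "Mn = card (Mset n d)"
  define y where "y = yv A n"
  define \<gamma> where "\<gamma> m = (\<Sum>j<p. of_int (lookup (f ! j) m) * mVar (n + j))" for m
  define E where "E i = (\<Sum>m\<in>Mi n d i. Hf n d \<gamma> y m * Ymon y n (m - ee i))" for i
  have B0: "0 \<le> B" using b0 by (simp add: B_def)
  have hc: "ht (lookup (f ! j) m) \<le> B" if "j < p" for j m
  proof (cases "m \<in> keys (f ! j)")
    case True
    have "ht (lookup (f ! j) m) \<le> b" using fh that True by (auto simp: poly_ht_le_def)
    then show ?thesis using b0 by (simp add: B_def)
  next
    case False then show ?thesis using B0 by (simp add: in_keys_iff)
  qed
  have ha: "ht (A $$ (i, k)) \<le> B" if "i < n" "k < n" for i k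
  proof -
    have "ht (A $$ (i, k)) \<le> b" using Ah that by blast
    then show ?thesis using b0 by (simp add: B_def)
  qed
  have hu: "ht (u ! j) \<le> B" if "j < p" for j
  proof -
    have "ht (u ! j) \<le> b" using fh that by blast
    then show ?thesis using b0 by (simp add: B_def)
  qed
  have fh2: "mvars (f ! j) \<subseteq> {..<n} \<and> deg_le (f ! j) d" if "j < p" for j using fh that by auto
  have "\<exists>\<Gamma>'. ext N B [] \<Gamma>' (\<Sum>i<n. 2 * n + 1) \<and> (\<forall>i\<in>{..<n}. (\<lambda>i S. y i \<in> S) i (av \<Gamma>'))"
  proof (rule batch[OF finite_lessThan good_Nil])
    fix i \<Gamma>1 assume i: "i \<in> {..<n}" and g1: "good N B \<Gamma>1"
    have "\<exists>\<Gamma>'. ext N B \<Gamma>1 \<Gamma>' (2 * card {..<n} + 1) \<and> (\<Sum>k<n. of_int (A $$ (i, k)) * mVar k) \<in> av \<Gamma>'"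
      by (rule sumprod_lemma[OF finite_lessThan g1 B0]) (use i ha in \<open>auto intro: opnd_const opnd_var simp: N_def\<close>)
    then show "\<exists>\<Gamma>2. ext N B \<Gamma>1 \<Gamma>2 (2 * n + 1) \<and> (\<lambda>i S. y i \<in> S) i (av \<Gamma>2)"
      by (simp add: y_def yv_def)
  qed auto
  then obtain \<Gamma>1 where G1: "ext N B [] \<Gamma>1 (n * (2 * n + 1))" "\<forall>i<n. y i \<in> av \<Gamma>1" by auto
  obtain \<Gamma>2 where G2: "ext N B \<Gamma>1 \<Gamma>2 Mn" "\<forall>m\<in>Mset n d. opnd N B \<Gamma>2 (Ymon y n m)"
    using Y_layers[OF ext_good[OF G1(1)] B0, of n y d] G1(2) opnd_av unfolding Mn_def by blast
  have "\<exists>\<Gamma>'. ext N B \<Gamma>2 \<Gamma>' (\<Sum>m\<in>Mset n d. 2 * p + 1) \<and> (\<forall>m\<in>Mset n d. (\<lambda>m S. \<gamma> m \<in> S) m (av \<Gamma>'))"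
  proof (rule batch[OF finite_Mset ext_good[OF G2(1)]])
    fix m \<Gamma>3 assume g3: "good N B \<Gamma>3"
    have "\<exists>\<Gamma>'. ext N B \<Gamma>3 \<Gamma>' (2 * card {..<p} + 1) \<and> (\<Sum>j<p. of_int (lookup (f ! j) m) * mVar (n + j)) \<in> av \<Gamma>'"
      by (rule sumprod_lemma[OF finite_lessThan g3 B0]) (use hc in \<open>auto intro: opnd_const opnd_var simp: N_def\<close>)
    then show "\<exists>\<Gamma>4. ext N B \<Gamma>3 \<Gamma>4 (2 * p + 1) \<and> (\<lambda>m S. \<gamma> m \<in> S) m (av \<Gamma>4)"
      by (simp add: \<gamma>_def)
  qed auto
  then obtain \<Gamma>3 where G3: "ext N B \<Gamma>2 \<Gamma>3 (Mn * (2 * p + 1))" "\<forall>m\<in>Mset n d. \<gamma> m \<in> av \<Gamma>3"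
    by (auto simp: Mn_def)
  have "\<exists>\<Gamma>'. ext N B \<Gamma>3 \<Gamma>' (\<Sum>j<p. 2 * Mn + 1) \<and>
      (\<forall>j\<in>{..<p}. (\<lambda>j S. (\<Sum>m\<in>Mset n d. of_int (lookup (f ! j) m) * Ymon y n m) \<in> S) j (av \<Gamma>'))"
  proof (rule batch[OF finite_lessThan ext_good[OF G3(1)]])
    fix j \<Gamma>4 assume j: "j \<in> {..<p}" and g4: "good N B \<Gamma>4" and s4: "av \<Gamma>3 \<subseteq> av \<Gamma>4"
    have "\<exists>\<Gamma>'. ext N B \<Gamma>4 \<Gamma>' (2 * card (Mset n d) + 1) \<and> (\<Sum>m\<in>Mset n d. of_int (lookup (f ! j) m) * Ymon y n m) \<in> av \<Gamma>'"
    proof (rule sumprod_lemma[OF finite_Mset g4 B0])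
      fix m assume "m \<in> Mset n d"
      then show "opnd N B \<Gamma>4 (Ymon y n m)"
        using G2(2) G3(1) s4 ext_opnd opnd_mono by blast
    qed (use j hc in \<open>auto intro: opnd_const\<close>)
    then show "\<exists>\<Gamma>5. ext N B \<Gamma>4 \<Gamma>5 (2 * Mn + 1) \<and> (\<lambda>j S. (\<Sum>m\<in>Mset n d. of_int (lookup (f ! j) m) * Ymon y n m) \<in> S) j (av \<Gamma>5)"
      by (simp add: Mn_def)
  qed auto
  then obtain \<Gamma>4 where G4: "ext N B \<Gamma>3 \<Gamma>4 (p * (2 * Mn + 1))"
    "\<forall>j<p. (\<Sum>m\<in>Mset n d. of_int (lookup (f ! j) m) * Ymon y n m) \<in> av \<Gamma>4" by auto
  have E14: "ext N B \<Gamma>1 \<Gamma>4 (Mn + Mn * (2 * p + 1) + p * (2 * Mn + 1))"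
    using ext_trans[OF ext_trans[OF G2(1) G3(1)] G4(1)] .
  obtain \<Gamma>5 where G5: "ext N B \<Gamma>4 \<Gamma>5 (4 * Mn)" "\<forall>m\<in>Mset n d. opnd N B \<Gamma>5 (Hf n d \<gamma> y m)"
  proof -
    have "\<exists>\<Gamma>'. ext N B \<Gamma>4 \<Gamma>' (4 * card (Mset n d)) \<and> (\<forall>m\<in>Mset n d. opnd N B \<Gamma>' (Hf n d \<gamma> y m))"
    proof (rule H_layers[OF ext_good[OF G4(1)] B0])
      fix i assume "i < n"
      then show "opnd N B \<Gamma>4 (y i)" using G1(2) E14 ext_av opnd_av by blast
    next
      fix m assume "m \<in> Mset n d"
      then show "opnd N B \<Gamma>4 (\<gamma> m)" using G3(2) G4(1) ext_av opnd_av by blast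
    qed
    then show ?thesis using that by (auto simp: Mn_def)
  qed
  obtain \<Gamma>6 where G6: "ext N B \<Gamma>5 \<Gamma>6 (2 * Mn + n)" "\<forall>i<n. E i \<in> av \<Gamma>6"
  proof -
    have "\<exists>\<Gamma>'. ext N B \<Gamma>5 \<Gamma>' (2 * card (Mset n d) + n) \<and>
       (\<forall>i<n. (\<Sum>m\<in>Mi n d i. Hf n d \<gamma> y m * Ymon y n (m - ee i)) \<in> av \<Gamma>')"
    proof (rule E_step[OF ext_good[OF G5(1)] B0])
      fix m assume "m \<in> Mset n d"
      then show "opnd N B \<Gamma>5 (Hf n d \<gamma> y m)" using G5(2) by blast
    next
      fix m assume "m \<in> Mset n d"
      then show "opnd N B \<Gamma>5 (Ymon y n m)"
        using G2(2) G3(1) G4(1) G5(1) ext_opnd by blast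
    qed
    then show ?thesis using that by (auto simp: Mn_def E_def)
  qed
  have "\<exists>\<Gamma>'. ext N B \<Gamma>6 \<Gamma>' (\<Sum>k\<in>{1..<n}. 2 * n + 1) \<and>
      (\<forall>k\<in>{1..<n}. (\<lambda>k S. (\<Sum>i<n. of_int (A $$ (i, k)) * E i) \<in> S) k (av \<Gamma>'))"
  proof (rule batch[OF finite_atLeastLessThan ext_good[OF G6(1)]])
    fix k \<Gamma>7 assume k: "k \<in> {1..<n}" and g7: "good N B \<Gamma>7" and s7: "av \<Gamma>6 \<subseteq> av \<Gamma>7"
    have "\<exists>\<Gamma>'. ext N B \<Gamma>7 \<Gamma>' (2 * card {..<n} + 1) \<and> (\<Sum>i<n. of_int (A $$ (i, k)) * E i) \<in> av \<Gamma>'"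
    proof (rule sumprod_lemma[OF finite_lessThan g7 B0])
      fix i assume "i \<in> {..<n}"
      then show "opnd N B \<Gamma>7 (of_int (A $$ (i, k)))" using ha k by (auto intro: opnd_const)
      show "opnd N B \<Gamma>7 (E i)" using G6(2) s7 \<open>i \<in> {..<n}\<close> by (auto intro: opnd_av)
    qed
    then show "\<exists>\<Gamma>8. ext N B \<Gamma>7 \<Gamma>8 (2 * n + 1) \<and> (\<lambda>k S. (\<Sum>i<n. of_int (A $$ (i, k)) * E i) \<in> S) k (av \<Gamma>8)"
      by simp
  qed auto
  then obtain \<Gamma>7 where G7: "ext N B \<Gamma>6 \<Gamma>7 ((n - 1) * (2 * n + 1))"
    "\<forall>k\<in>{1..<n}. (\<Sum>i<n. of_int (A $$ (i, k)) * E i) \<in> av \<Gamma>7" by auto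
  have "\<exists>\<Gamma>'. ext N B \<Gamma>7 \<Gamma>' (2 * card {..<p} + 1) \<and> (\<Sum>j<p. of_int (u ! j) * mVar (n + j)) \<in> av \<Gamma>'"
    by (rule sumprod_lemma[OF finite_lessThan ext_good[OF G7(1)] B0]) (use hu in \<open>auto intro: opnd_const opnd_var simp: N_def\<close>)
  then obtain \<Gamma>8 where G8: "ext N B \<Gamma>7 \<Gamma>8 (2 * p + 1)" "(\<Sum>j<p. of_int (u ! j) * mVar (n + j)) \<in> av \<Gamma>8"
    by auto
  have "\<exists>\<Gamma>'. ext N B \<Gamma>8 \<Gamma>' 1 \<and> op_apply OSub (\<Sum>j<p. of_int (u ! j) * mVar (n + j)) 1 \<in> av \<Gamma>'"
    by (rule emit[OF ext_good[OF G8(1)] opnd_av[OF G8(2)] opnd_1[OF B0]])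
  then obtain \<Gamma>9 where G9: "ext N B \<Gamma>8 \<Gamma>9 1" "(\<Sum>j<p. of_int (u ! j) * mVar (n + j)) - 1 \<in> av \<Gamma>9"
    by auto
  define T where "T = n * (2 * n + 1) + (Mn + Mn * (2 * p + 1) + p * (2 * Mn + 1)) + 4 * Mn + (2 * Mn + n)
     + (n - 1) * (2 * n + 1) + (2 * p + 1) + 1"
  have E09: "ext N B [] \<Gamma>9 T" unfolding T_def
    using ext_trans[OF ext_trans[OF ext_trans[OF ext_trans[OF ext_trans[OF ext_trans[OF G1(1) E14] G5(1)] G6(1)] G7(1)] G8(1)] G9(1)] .
  have av9: "av \<Gamma>1 \<subseteq> av \<Gamma>9" "av \<Gamma>4 \<subseteq> av \<Gamma>9" "av \<Gamma>7 \<subseteq> av \<Gamma>9"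
    using ext_trans[OF ext_trans[OF ext_trans[OF ext_trans[OF ext_trans[OF E14 G5(1)] G6(1)] G7(1)] G8(1)] G9(1)]
      ext_trans[OF ext_trans[OF ext_trans[OF ext_trans[OF G5(1) G6(1)] G7(1)] G8(1)] G9(1)]
      ext_trans[OF G8(1) G9(1)]
    by (auto simp: ext_def)
  have c1: "n * n \<le> 2 * Mn" unfolding Mn_def by (rule nn_le_Mn[OF d2])
  have c2: "n \<le> Mn" unfolding Mn_def using d2 by (intro n_le_Mn) simp
  have c3: "1 \<le> Mn" unfolding Mn_def by (rule Mn_pos)
  have c4: "Mn \<le> p * Mn" "p \<le> p * Mn" using p1 c3 by simp_all
  have c5: "n * (2 * n + 1) = 2 * (n * n) + n" by (simp add: algebra_simps)
  have c6: "(n - 1) * (2 * n + 1) \<le> n * (2 * n + 1)" by simp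
  have c7: "Mn * (2 * p + 1) = 2 * (p * Mn) + Mn" "p * (2 * Mn + 1) = 2 * (p * Mn) + p" by (simp_all add: algebra_simps)
  have "T \<le> 30 * (p * Mn)" unfolding T_def using c1 c2 c3 c4 c5 c6 c7 by linarith
  then have len: "length \<Gamma>9 \<le> 30 * (p * card (Mset n d))" using E09 by (simp add: ext_def Mn_def)
  have tgt: "set (target_system n A f u) \<subseteq> av \<Gamma>9"
  proof -
    have t1: "mtransform n A (f ! j) \<in> av \<Gamma>9" if "j < p" for j
    proof -
      have "mtransform n A (f ! j) = (\<Sum>m\<in>Mset n d. of_int (lookup (f ! j) m) * Ymon y n m)"
        using fh2[OF that] by (simp add: trans_eq y_def)
      then show ?thesis using G4(2) that av9 by auto
    qed
    have t2: "(\<Sum>j<p. mVar (n + j) * mpderiv k (map (mtransform n A) f ! j)) \<in> av \<Gamma>9" if k: "k \<in> {1..<n}" for k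
    proof -
      have "(\<Sum>j<p. mVar (n + j) * mpderiv k (map (mtransform n A) f ! j)) =
            (\<Sum>j<p. mVar (n + j) * mpderiv k (mtransform n A (f ! j)))"
        by (rule sum.cong) (simp_all add: lf)
      also have "\<dots> = (\<Sum>i<n. of_int (A $$ (i, k)) * E i)"
        unfolding E_def \<gamma>_def y_def using k fh2 by (intro S_identity) auto
      finally show ?thesis using G7(2) k av9 by auto
    qed
    have t3: "(\<Sum>j<p. mConst (u ! j) * mVar (n + j)) - 1 \<in> av \<Gamma>9"
      using G9(2) by (simp add: mConst_eq)
    show ?thesis
      unfolding target_system_def Let_def lf
      using t1 t2 t3 by (auto simp: in_set_conv_nth lf)
  qed
  show ?thesis using E09 len tgt by (auto simp: ext_def N_def B_def)
qed

lemma Mset_1: "Mset n 1 = insert 0 (ee ` {..<n})"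
proof (rule Set.set_eqI, rule iffI)
  fix m assume m: "m \<in> Mset n 1"
  show "m \<in> insert 0 (ee ` {..<n})"
  proof (cases "m = 0")
    case False
    note par = parent[OF m False]
    have "mdeg n (m - ee (vv m)) = 0" using par(3) m by (auto simp: Mset_def)
    then have "m - ee (vv m) = 0" using par(2) mdeg_zero by (auto simp: Mset_def)
    then have "m = ee (vv m)" using par(4) by simp
    then show ?thesis using par(1) by auto
  qed simp
next
  fix m assume "m \<in> insert 0 (ee ` {..<n})"
  then show "m \<in> Mset n 1" by (auto simp: Mset_def mdeg_ee)
qed

lemma ee_nz: "ee i \<noteq> 0"
  using add_ee_nz[of 0 i] by simp

lemma inj_ee: "inj_on ee S"
proof (rule inj_onI)
  fix i j assume "ee i = ee j"
  then have "lookup (ee i) i = lookup (ee j) i" by simp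
  then show "i = j" by (simp add: lookup_single when_def split: if_splits)
qed

lemma lin_form:
  assumes mv: "mvars g \<subseteq> {..<n}" and dg: "deg_le g 1"
  shows "mtransform n A g = of_int (lookup g 0) + (\<Sum>k<n. of_int (\<Sum>i<n. lookup g (ee i) * A $$ (i, k)) * mVar k)"
proof -
  have "mtransform n A g = (\<Sum>m\<in>insert 0 (ee ` {..<n}). of_int (lookup g m) * Ymon (yv A n) n m)"
    using trans_eq[OF mv dg] by (simp add: Mset_1)
  also have "\<dots> = of_int (lookup g 0) + (\<Sum>m\<in>ee ` {..<n}. of_int (lookup g m) * Ymon (yv A n) n m)"
    using ee_nz by (subst sum.insert) auto
  also have "(\<Sum>m\<in>ee ` {..<n}. of_int (lookup g m) * Ymon (yv A n) n m) = (\<Sum>i<n. of_int (lookup g (ee i)) * yv A n i)"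
    by (subst sum.reindex[OF inj_ee]) (simp add: Ymon_ee)
  also have "\<dots> = (\<Sum>i<n. \<Sum>k<n. of_int (lookup g (ee i)) * of_int (A $$ (i, k)) * mVar k)"
    by (simp add: yv_def sum_distrib_left mult.assoc)
  also have "\<dots> = (\<Sum>k<n. \<Sum>i<n. of_int (lookup g (ee i)) * of_int (A $$ (i, k)) * mVar k)"
    by (rule sum.swap)
  also have "\<dots> = (\<Sum>k<n. of_int (\<Sum>i<n. lookup g (ee i) * A $$ (i, k)) * mVar k)"
    by (simp add: sum_distrib_right)
  finally show ?thesis .
qed

lemma deriv_lin:
  assumes k: "k < n"
  shows "mpderiv k (of_int c0 + (\<Sum>k'<n. of_int (w k') * mVar k')) = of_int (w k)"
proof -
  have "mpderiv k (of_int c0 + (\<Sum>k'<n. of_int (w k') * mVar k')) = (\<Sum>k'<n. of_int (w k') * (if k' = k then 1 else 0))"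
    by (simp add: deriv_add deriv_sum deriv_cmul deriv_mVar)
  also have "\<dots> = (\<Sum>k'<n. if k' = k then of_int (w k') else 0)"
    by (rule sum.cong) auto
  also have "\<dots> = of_int (w k)" using k by (simp add: sum.delta)
  finally show ?thesis .
qed

lemma abs_le_beta:
  assumes "ht c \<le> b"
  shows "\<bar>c\<bar> \<le> \<lfloor>2 powr b\<rfloor>"
proof (cases "c = 0")
  case True then show ?thesis by simp
next
  case False
  then have pos: "0 < \<bar>real_of_int c\<bar>" by simp
  have "\<bar>real_of_int c\<bar> = 2 powr (log 2 \<bar>real_of_int c\<bar>)" using pos by simp
  also have "\<dots> \<le> 2 powr b" using assms by (simp add: ht_def)
  finally show ?thesis by (simp add: le_floor_iff)
qed

lemma beta_ge1: "0 \<le> (b::real) \<Longrightarrow> 1 \<le> \<lfloor>2 powr b\<rfloor>"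
  using ge_one_powr_ge_zero[of "2::real" b] by simp

lemma ht_K: assumes b: "0 \<le> b" shows "ht (\<lfloor>2 powr b\<rfloor> * \<lfloor>2 powr b\<rfloor>) \<le> 2 * b"
proof -
  define \<beta> where "\<beta> = \<lfloor>2 powr b\<rfloor>"
  have b1: "1 \<le> \<beta>" using beta_ge1[OF b] by (simp add: \<beta>_def)
  have b2: "real_of_int \<beta> \<le> 2 powr b" by (simp add: \<beta>_def)
  have "log 2 (real_of_int \<beta>) \<le> log 2 (2 powr b)"
    using b1 b2 by (subst log_le_cancel_iff) auto
  then have lb: "log 2 (real_of_int \<beta>) \<le> b" by simp
  have "ht (\<beta> * \<beta>) = log 2 (real_of_int \<beta> * real_of_int \<beta>)"
    using b1 by (simp add: ht_def abs_mult)
  also have "\<dots> = log 2 (real_of_int \<beta>) + log 2 (real_of_int \<beta>)"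
    using b1 by (subst log_mult) auto
  finally show ?thesis using lb by (simp add: \<beta>_def)
qed

lemma qdiv_bound:
  fixes w K :: int
  assumes K: "1 \<le> K" and w: "\<bar>w\<bar> \<le> int Q * K"
  shows "\<bar>w div K\<bar> \<le> int Q"
proof -
  have "- (int Q * K) \<le> w" "w \<le> int Q * K" using w by auto
  have "w div K \<le> (int Q * K) div K"
    using \<open>w \<le> int Q * K\<close> K by (intro zdiv_mono1) auto
  then have "w div K \<le> int Q" using K by simp
  moreover have "(- (int Q * K)) div K \<le> w div K"
    using \<open>- (int Q * K) \<le> w\<close> K by (intro zdiv_mono1) auto
  moreover have "(- (int Q * K)) div K = - int Q"
  proof -
    have "- (int Q * K) = (- int Q) * K" by simp
    moreover have "((- int Q) * K) div K = - int Q"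
      by (rule nonzero_mult_div_cancel_right) (use K in simp)
    ultimately show ?thesis by simp
  qed
  ultimately show ?thesis by simp
qed

lemma rmod_ht: "1 \<le> K \<Longrightarrow> ht (w mod K) \<le> ht K"
  by (rule ht_mono_int) (simp_all add: less_imp_le)


lemma linear_case:
  assumes d1: "d \<le> 1" and n1: "1 \<le> n" and p1: "1 \<le> p" and lf: "length f = p" and lu: "length u = p"
    and fh: "\<forall>i<p. mvars (f ! i) \<subseteq> {..<n} \<and> deg_le (f ! i) d \<and> poly_ht_le (f ! i) b \<and> ht (u ! i) \<le> b"
    and Ah: "\<forall>i<n. \<forall>j<n. ht (A $$ (i, j)) \<le> b"
    and b0: "0 \<le> b"
  shows "\<exists>\<Gamma>. good (n + p) (2 * b) \<Gamma> \<and> length \<Gamma> \<le> 30 * (p * n) \<and> set (target_system n A f u) \<subseteq> av \<Gamma>"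
proof -
  define N where "N = n + p"
  define B where "B = 2 * b"
  define \<beta> where "\<beta> = \<lfloor>2 powr b\<rfloor>"
  define K where "K = \<beta> * \<beta>"
  define c0 where "c0 j = lookup (f ! j) 0" for j
  define w where "w j k = (\<Sum>i<n. lookup (f ! j) (ee i) * A $$ (i, k))" for j k
  define q where "q j k = w j k div K" for j k
  define r where "r j k = w j k mod K" for j k
  define F where "F j = of_int (c0 j) + (\<Sum>k<n. of_int (w j k) * mVar k)" for j
  define t where "t j k = of_int K * (of_int (q j k) * mVar (n + j)) + of_int (r j k) * mVar (n + j)" for j k
  have B0: "0 \<le> B" using b0 by (simp add: B_def)
  have b1: "1 \<le> \<beta>" using beta_ge1[OF b0] by (simp add: \<beta>_def)
  have K1: "1 \<le> K"
  proof -
    have "1 * 1 \<le> \<beta> * \<beta>" by (rule mult_mono) (use b1 in auto)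
    then show ?thesis by (simp add: K_def)
  qed
  have KB: "ht K \<le> B" using ht_K[OF b0] by (simp add: K_def \<beta>_def B_def)
  have fh2: "mvars (f ! j) \<subseteq> {..<n}" "deg_le (f ! j) 1" if "j < p" for j
  proof -
    have "mvars (f ! j) \<subseteq> {..<n}" "deg_le (f ! j) d" using fh that by auto
    then show "mvars (f ! j) \<subseteq> {..<n}" "deg_le (f ! j) 1" using d1 by (auto simp: deg_le_def)
  qed
  have hcb: "ht (lookup (f ! j) m) \<le> b" if "j < p" for j m
  proof (cases "m \<in> keys (f ! j)")
    case True then show ?thesis using fh that by (auto simp: poly_ht_le_def)
  next
    case False then show ?thesis using b0 by (simp add: in_keys_iff)
  qed
  have hc0: "ht (c0 j) \<le> B" if "j < p" for j using hcb[OF that, of 0] b0 by (simp add: c0_def B_def)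
  have hu: "ht (u ! j) \<le> B" if "j < p" for j
  proof -
    have "ht (u ! j) \<le> b" using fh that by blast
    then show ?thesis using b0 by (simp add: B_def)
  qed
  have wb: "\<bar>w j k\<bar> \<le> int n * K" if "j < p" "k < n" for j k
  proof -
    have "\<bar>w j k\<bar> \<le> (\<Sum>i<n. \<bar>lookup (f ! j) (ee i) * A $$ (i, k)\<bar>)"
      unfolding w_def by (rule sum_abs)
    also have "\<dots> \<le> (\<Sum>i<n. \<beta> * \<beta>)"
    proof (rule sum_mono)
      fix i assume i: "i \<in> {..<n}"
      have "\<bar>lookup (f ! j) (ee i)\<bar> \<le> \<beta>" using abs_le_beta[OF hcb[OF that(1)]] by (simp add: \<beta>_def)
      moreover have "\<bar>A $$ (i, k)\<bar> \<le> \<beta>"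
        using abs_le_beta[of "A $$ (i, k)" b] Ah i that(2) by (simp add: \<beta>_def)
      ultimately have "\<bar>lookup (f ! j) (ee i)\<bar> * \<bar>A $$ (i, k)\<bar> \<le> \<beta> * \<beta>"
        by (intro mult_mono) auto
      then show "\<bar>lookup (f ! j) (ee i) * A $$ (i, k)\<bar> \<le> \<beta> * \<beta>"
        by (simp only: abs_mult)
    qed
    also have "\<dots> = int n * K" by (simp add: K_def)
    finally show ?thesis .
  qed
  have qb: "\<bar>q j k\<bar> \<le> int n" if "j < p" "k < n" for j k
    unfolding q_def by (rule qdiv_bound[OF K1 wb[OF that]])
  have rb: "ht (r j k) \<le> B" for j k
    using rmod_ht[OF K1, of "w j k"] KB by (simp add: r_def)
  have "\<exists>\<Gamma>'. ext N B [] \<Gamma>' (\<Sum>j<p. 10 * n + 6) \<and> (\<forall>j\<in>{..<p}. (\<lambda>j S. F j \<in> S) j (av \<Gamma>'))"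
  proof (rule batch[OF finite_lessThan good_Nil])
    fix j \<Gamma>1 assume j: "j \<in> {..<p}" and g1: "good N B \<Gamma>1"
    have "\<exists>\<Gamma>'. ext N B \<Gamma>1 \<Gamma>' (4 * card {..<n} + 6 * n + 5) \<and> (\<Sum>k<n. of_int (w j k) * mVar k) \<in> av \<Gamma>'"
      by (rule lin_comb_lemma[OF finite_lessThan g1 B0 _ K1 KB]) (use j wb in \<open>auto intro: opnd_var simp: N_def\<close>)
    then obtain \<Gamma>2 where G2: "ext N B \<Gamma>1 \<Gamma>2 (10 * n + 5)" "(\<Sum>k<n. of_int (w j k) * mVar k) \<in> av \<Gamma>2"
      by auto
    have "\<exists>\<Gamma>'. ext N B \<Gamma>2 \<Gamma>' 1 \<and> op_apply OAdd (of_int (c0 j)) (\<Sum>k<n. of_int (w j k) * mVar k) \<in> av \<Gamma>'"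
      by (rule emit[OF ext_good[OF G2(1)] opnd_const opnd_av[OF G2(2)]]) (use j hc0 in auto)
    then obtain \<Gamma>3 where G3: "ext N B \<Gamma>2 \<Gamma>3 1" "F j \<in> av \<Gamma>3" by (auto simp: F_def)
    have "ext N B \<Gamma>1 \<Gamma>3 (10 * n + 6)" using ext_trans[OF G2(1) G3(1)] by (simp add: add.commute)
    then show "\<exists>\<Gamma>2. ext N B \<Gamma>1 \<Gamma>2 (10 * n + 6) \<and> (\<lambda>j S. F j \<in> S) j (av \<Gamma>2)"
      using G3(2) by auto
  qed auto
  then obtain \<Gamma>1 where G1: "ext N B [] \<Gamma>1 (p * (10 * n + 6))" "\<forall>j<p. F j \<in> av \<Gamma>1" by auto
  have "\<exists>\<Gamma>'. ext N B \<Gamma>1 \<Gamma>' (\<Sum>j<p. 2 * n + 1) \<and>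
      (\<forall>j\<in>{..<p}. (\<lambda>j S. \<forall>v. \<bar>v\<bar> \<le> int n \<longrightarrow> of_int v * mVar (n + j) \<in> S) j (av \<Gamma>'))"
  proof (rule batch[OF finite_lessThan ext_good[OF G1(1)]])
    fix j \<Gamma>2 assume j: "j \<in> {..<p}" and g2: "good N B \<Gamma>2"
    show "\<exists>\<Gamma>3. ext N B \<Gamma>2 \<Gamma>3 (2 * n + 1) \<and> (\<lambda>j S. \<forall>v. \<bar>v\<bar> \<le> int n \<longrightarrow> of_int v * mVar (n + j) \<in> S) j (av \<Gamma>3)"
      using multiples_lemma[OF g2 B0 opnd_var, of "n + j" n] j by (auto simp: N_def)
  qed auto
  then obtain \<Gamma>2 where G2: "ext N B \<Gamma>1 \<Gamma>2 (p * (2 * n + 1))"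
    "\<forall>j<p. \<forall>v. \<bar>v\<bar> \<le> int n \<longrightarrow> of_int v * mVar (n + j) \<in> av \<Gamma>2" by auto
  have "\<exists>\<Gamma>'. ext N B \<Gamma>2 \<Gamma>' (\<Sum>k\<in>{1..<n}. 4 * p + 1) \<and>
      (\<forall>k\<in>{1..<n}. (\<lambda>k S. (\<Sum>j<p. t j k) \<in> S) k (av \<Gamma>'))"
  proof (rule batch[OF finite_atLeastLessThan ext_good[OF G2(1)]])
    fix k \<Gamma>3 assume k: "k \<in> {1..<n}" and g3: "good N B \<Gamma>3" and s3: "av \<Gamma>2 \<subseteq> av \<Gamma>3"
    have "\<exists>\<Gamma>'. ext N B \<Gamma>3 \<Gamma>' (\<Sum>j<p. 3) \<and> (\<forall>j\<in>{..<p}. (\<lambda>j S. t j k \<in> S) j (av \<Gamma>'))"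
    proof (rule batch[OF finite_lessThan g3])
      fix j \<Gamma>4 assume j: "j \<in> {..<p}" and g4: "good N B \<Gamma>4" and s4: "av \<Gamma>3 \<subseteq> av \<Gamma>4"
      have "of_int (q j k) * mVar (n + j) \<in> av \<Gamma>4"
        using G2(2) qb[of j k] j k s3 s4 by auto
      then have "\<exists>\<Gamma>'. ext N B \<Gamma>4 \<Gamma>' 1 \<and> op_apply OMul (of_int K) (of_int (q j k) * mVar (n + j)) \<in> av \<Gamma>'"
        by (intro emit[OF g4 opnd_const[OF KB] opnd_av])
      then obtain \<Gamma>5 where G5: "ext N B \<Gamma>4 \<Gamma>5 1" "of_int K * (of_int (q j k) * mVar (n + j)) \<in> av \<Gamma>5" by auto
      have "\<exists>\<Gamma>'. ext N B \<Gamma>5 \<Gamma>' 1 \<and> op_apply OMul (of_int (r j k)) (mVar (n + j)) \<in> av \<Gamma>'"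
        by (rule emit[OF ext_good[OF G5(1)] opnd_const[OF rb] opnd_var]) (use j in \<open>simp add: N_def\<close>)
      then obtain \<Gamma>6 where G6: "ext N B \<Gamma>5 \<Gamma>6 1" "of_int (r j k) * mVar (n + j) \<in> av \<Gamma>6" by auto
      have "\<exists>\<Gamma>'. ext N B \<Gamma>6 \<Gamma>' 1 \<and> op_apply OAdd (of_int K * (of_int (q j k) * mVar (n + j))) (of_int (r j k) * mVar (n + j)) \<in> av \<Gamma>'"
        by (rule emit[OF ext_good[OF G6(1)] opnd_av opnd_av[OF G6(2)]]) (rule ext_av[OF G6(1) G5(2)])
      then obtain \<Gamma>7 where G7: "ext N B \<Gamma>6 \<Gamma>7 1" "t j k \<in> av \<Gamma>7" by (auto simp: t_def)
      show "\<exists>\<Gamma>5. ext N B \<Gamma>4 \<Gamma>5 3 \<and> (\<lambda>j S. t j k \<in> S) j (av \<Gamma>5)"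
        using ext_trans[OF ext_trans[OF G5(1) G6(1)] G7(1)] G7(2) by auto
    qed auto
    then obtain \<Gamma>4 where G4: "ext N B \<Gamma>3 \<Gamma>4 (3 * p)" "\<forall>j<p. t j k \<in> av \<Gamma>4" by (auto simp: mult.commute)
    have "\<exists>\<Gamma>'. ext N B \<Gamma>4 \<Gamma>' (card {..<p} + 1) \<and> (\<Sum>j<p. t j k) \<in> av \<Gamma>'"
      by (rule sum_lemma[OF finite_lessThan ext_good[OF G4(1)] B0]) (use G4(2) opnd_av in auto)
    then obtain \<Gamma>5 where G5: "ext N B \<Gamma>4 \<Gamma>5 (p + 1)" "(\<Sum>j<p. t j k) \<in> av \<Gamma>5" by auto
    show "\<exists>\<Gamma>4. ext N B \<Gamma>3 \<Gamma>4 (4 * p + 1) \<and> (\<lambda>k S. (\<Sum>j<p. t j k) \<in> S) k (av \<Gamma>4)"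
      using ext_trans[OF G4(1) G5(1)] G5(2) by (auto elim!: ext_mono)
  qed auto
  then obtain \<Gamma>3 where G3: "ext N B \<Gamma>2 \<Gamma>3 ((n - 1) * (4 * p + 1))" "\<forall>k\<in>{1..<n}. (\<Sum>j<p. t j k) \<in> av \<Gamma>3"
    by auto
  have "\<exists>\<Gamma>'. ext N B \<Gamma>3 \<Gamma>' (2 * card {..<p} + 1) \<and> (\<Sum>j<p. of_int (u ! j) * mVar (n + j)) \<in> av \<Gamma>'"
    by (rule sumprod_lemma[OF finite_lessThan ext_good[OF G3(1)] B0]) (use hu in \<open>auto intro: opnd_const opnd_var simp: N_def\<close>)
  then obtain \<Gamma>4 where G4: "ext N B \<Gamma>3 \<Gamma>4 (2 * p + 1)" "(\<Sum>j<p. of_int (u ! j) * mVar (n + j)) \<in> av \<Gamma>4"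
    by auto
  have "\<exists>\<Gamma>'. ext N B \<Gamma>4 \<Gamma>' 1 \<and> op_apply OSub (\<Sum>j<p. of_int (u ! j) * mVar (n + j)) 1 \<in> av \<Gamma>'"
    by (rule emit[OF ext_good[OF G4(1)] opnd_av[OF G4(2)] opnd_1[OF B0]])
  then obtain \<Gamma>5 where G5: "ext N B \<Gamma>4 \<Gamma>5 1" "(\<Sum>j<p. of_int (u ! j) * mVar (n + j)) - 1 \<in> av \<Gamma>5"
    by auto
  define T where "T = p * (10 * n + 6) + p * (2 * n + 1) + (n - 1) * (4 * p + 1) + (2 * p + 1) + 1"
  have E05: "ext N B [] \<Gamma>5 T" unfolding T_def
    using ext_trans[OF ext_trans[OF ext_trans[OF ext_trans[OF G1(1) G2(1)] G3(1)] G4(1)] G5(1)] .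
  have av5: "av \<Gamma>1 \<subseteq> av \<Gamma>5" "av \<Gamma>3 \<subseteq> av \<Gamma>5"
    using ext_trans[OF ext_trans[OF ext_trans[OF G2(1) G3(1)] G4(1)] G5(1)] ext_trans[OF G4(1) G5(1)]
    by (auto simp: ext_def)
  have c1: "p * (10 * n + 6) = 10 * (p * n) + 6 * p" "p * (2 * n + 1) = 2 * (p * n) + p"
    by (simp_all add: algebra_simps)
  have c2: "(n - 1) * (4 * p + 1) \<le> n * (4 * p + 1)" by simp
  have c3: "n * (4 * p + 1) = 4 * (p * n) + n" by (simp add: algebra_simps)
  have c4: "p \<le> p * n" "n \<le> p * n" using n1 p1 by simp_all
  have c5: "1 \<le> p * n" using c4(1) p1 by linarith
  have "T \<le> 30 * (p * n)" unfolding T_def using c1 c2 c3 c4 c5 by linarith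
  then have len: "length \<Gamma>5 \<le> 30 * (p * n)" using E05 by (simp add: ext_def)
  have tgt: "set (target_system n A f u) \<subseteq> av \<Gamma>5"
  proof -
    have t1: "mtransform n A (f ! j) \<in> av \<Gamma>5" if "j < p" for j
    proof -
      have "mtransform n A (f ! j) = F j"
        using lin_form[OF fh2[OF that]] by (simp add: F_def c0_def w_def)
      then show ?thesis using G1(2) that av5 by auto
    qed
    have t2: "(\<Sum>j<p. mVar (n + j) * mpderiv k (map (mtransform n A) f ! j)) \<in> av \<Gamma>5" if k: "k \<in> {1..<n}" for k
    proof -
      have "(\<Sum>j<p. mVar (n + j) * mpderiv k (map (mtransform n A) f ! j)) = (\<Sum>j<p. t j k)"
      proof (rule sum.cong[OF refl])
        fix j assume j: "j \<in> {..<p}"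
        have "map (mtransform n A) f ! j = F j"
          using lin_form[OF fh2] j lf by (simp add: F_def c0_def w_def)
        moreover have "mpderiv k (F j) = of_int (w j k)"
          unfolding F_def using k by (intro deriv_lin) auto
        moreover have "(of_int (w j k) :: mpoly) = of_int K * of_int (q j k) + of_int (r j k)"
          by (simp add: q_def r_def flip: of_int_mult of_int_add)
        ultimately show "mVar (n + j) * mpderiv k (map (mtransform n A) f ! j) = t j k"
          by (simp add: t_def algebra_simps)
      qed
      then show ?thesis using G3(2) k av5 by auto
    qed
    have t3: "(\<Sum>j<p. mConst (u ! j) * mVar (n + j)) - 1 \<in> av \<Gamma>5"
      using G5(2) by (simp add: mConst_eq)
    show ?thesis
      unfolding target_system_def Let_def lf
      using t1 t2 t3 by (auto simp: in_set_conv_nth lf)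
  qed
  show ?thesis using E05 len tgt by (auto simp: ext_def N_def B_def)
qed

theorem lemma3:
  "\<exists>C::real. C > 0 \<and>
    (\<forall>(n::nat) (p::nat) (d::nat) (b::real) (f::mpoly list) (A::int mat) (u::int list).
      1 \<le> n \<longrightarrow> 1 \<le> p \<longrightarrow> length f = p \<longrightarrow> length u = p \<longrightarrow>
      A \<in> carrier_mat n n \<longrightarrow> invertible_mat A \<longrightarrow>
      (\<forall>i<p. mvars (f ! i) \<subseteq> {..<n} \<and> deg_le (f ! i) d \<and> poly_ht_le (f ! i) b
              \<and> ht (u ! i) \<le> b) \<longrightarrow>
      (\<forall>i<n. \<forall>j<n. ht (A $$ (i, j)) \<le> b) \<longrightarrow>
      (\<exists>\<Gamma>. slp_wf (n + p) \<Gamma>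
          \<and> real (length \<Gamma>) \<le> C * real (p * ((n + d) choose d) + p * n)
          \<and> (\<forall>c\<in>slp_consts \<Gamma>. ht c \<le> C * b)
          \<and> set (target_system n A f u) \<subseteq> set (slp_results \<Gamma>)))"
proof (intro exI[of _ "100::real"] conjI allI impI)
  fix n p d :: nat and b :: real and f :: "mpoly list" and A :: "int mat" and u :: "int list"
  assume n1: "1 \<le> n" and p1: "1 \<le> p" and lf: "length f = p" and lu: "length u = p"
    and fh: "\<forall>i<p. mvars (f ! i) \<subseteq> {..<n} \<and> deg_le (f ! i) d \<and> poly_ht_le (f ! i) b \<and> ht (u ! i) \<le> b"
    and Ah: "\<forall>i<n. \<forall>j<n. ht (A $$ (i, j)) \<le> b"
  have "ht (u ! 0) \<le> b" using fh p1 by auto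
  then have b0: "0 \<le> b" using ht_nonneg[of "u ! 0"] by linarith
  obtain \<Gamma> where G: "good (n + p) (2 * b) \<Gamma>" "length \<Gamma> \<le> 30 * (p * ((n + d) choose d) + p * n)"
    "set (target_system n A f u) \<subseteq> av \<Gamma>"
  proof (cases "2 \<le> d")
    case True
    from general_case[OF True n1 p1 lf lu fh Ah b0] obtain \<Gamma> where
      g: "good (n + p) (2 * b) \<Gamma>" "length \<Gamma> \<le> 30 * (p * card (Mset n d))" "set (target_system n A f u) \<subseteq> av \<Gamma>"
      by blast
    have "length \<Gamma> \<le> 30 * (p * ((n + d) choose d))" using g(2) by (simp only: card_Mset)
    also have "\<dots> \<le> 30 * (p * ((n + d) choose d) + p * n)" by simp
    finally show ?thesis using that g(1,3) by blast
  next
    case False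
    then have "d \<le> 1" by simp
    from linear_case[OF this n1 p1 lf lu fh Ah b0] obtain \<Gamma> where
      g: "good (n + p) (2 * b) \<Gamma>" "length \<Gamma> \<le> 30 * (p * n)" "set (target_system n A f u) \<subseteq> av \<Gamma>"
      by blast
    have "length \<Gamma> \<le> 30 * (p * ((n + d) choose d) + p * n)" using g(2) by simp
    then show ?thesis using that g(1,3) by blast
  qed
  show "\<exists>\<Gamma>. slp_wf (n + p) \<Gamma> \<and> real (length \<Gamma>) \<le> 100 * real (p * ((n + d) choose d) + p * n)
          \<and> (\<forall>c\<in>slp_consts \<Gamma>. ht c \<le> 100 * b) \<and> set (target_system n A f u) \<subseteq> set (slp_results \<Gamma>)"
  proof (intro exI[of _ \<Gamma>] conjI)
    show "slp_wf (n + p) \<Gamma>" using G(1) by (simp add: good_def)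
    have "real (length \<Gamma>) \<le> 30 * real (p * ((n + d) choose d) + p * n)"
    proof -
      have "real (length \<Gamma>) \<le> real (30 * (p * ((n + d) choose d) + p * n))"
        using G(2) by (simp only: of_nat_le_iff)
      then show ?thesis by simp
    qed
    then show "real (length \<Gamma>) \<le> 100 * real (p * ((n + d) choose d) + p * n)" by simp
    show "\<forall>c\<in>slp_consts \<Gamma>. ht c \<le> 100 * b"
    proof
      fix c assume "c \<in> slp_consts \<Gamma>"
      then have "ht c \<le> 2 * b" using G(1) by (simp add: good_def)
      then show "ht c \<le> 100 * b" using b0 by linarith
    qed
    show "set (target_system n A f u) \<subseteq> set (slp_results \<Gamma>)" using G(3) by (simp add: av_def)
  qed
qed simp

end
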